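(* Let $l$ be the intersection of $B^d$ with an affine hyperplane of ${\mathbb R}^d$, and let $h=h_-+(h_+-h_-)\mathbf 1_{l^+}$ be a continuous wedge on $l$ with angle $\alpha>0$. Then $$\mathbf{MM}(h)=\alpha\,\omega_l,$$ where $\omega_l$ is the measure on $B^d$ supported on $l$ given by the volume measure of $l$ for the Riemannian metric induced on $l$ by $g_{{\mathbb H}^d}$ (with which $l$ is isometric to ${\mathbb H}^{d-1}$).
   Context: $B^d$ is the open Euclidean unit ball of ${\mathbb R}^d$, with Euclidean inner product $\langle\cdot,\cdot\rangle_d$ and norm $\|\cdot\|$, $L(x)=\sqrt{1-\|x\|^2}$, and $g_{{\mathbb H}^d}(x)(X,Y)=L(x)^{-2}\langle X,Y\rangle_d+L(x)^{-4}\langle x,X\rangle_d\langle x,Y\rangle_d$ is the Klein hyperbolic metric on $B^d$. Wedges. Let $l$ be the intersection of $B^d$ with an affine hyperplane of ${\mathbb R}^d$; it separates $B^d$ into two components, $l^-$ the one containing $0$ (chosen arbitrarily if $0\in l$) and $l^+$ the other. Let $p_l$ be the Euclidean orthogonal projection of $0$ onto $l$ and $n_l=p_l/\|p_l\|$ (if $0\in l$, $n_l$ is the Euclidean unit normal to $l$ pointing into $l^+$). The canonical map of $l$ is $h_l(x)=\frac{1}{L(p_l)}\langle x-p_l,n_l\rangle_d$. A wedge on $l$ is a continuous map $h=h_-+(h_+-h_-)\mathbf 1_{l^+}$ with $h_-,h_+$ affine functions (agreeing on $l$); its angle is the unique real $\alpha$ with $h_+-h_-=\alpha h_l$. Mean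 curvature measure. For convex $h:B^d\to{\mathbb R}$, its second distributional derivatives $\partial_{ij}h$ are Radon measures on $B^d$, and $\mathbf{MM}(h)$ is the Radon measure $L(x)^{-d}\sum_{i,j=1}^d(\delta_{ij}-x_ix_j)\,\partial_{ij}h$. *)

theory Defs
  imports "HOL-Analysis.Analysis"
begin

text \<open>Ambient space R^d is rendered as real^'n (d = CARD('n)); B^d = ball 0 1.\<close>

definition L :: "real^'n \<Rightarrow> real" where
  "L x = sqrt (1 - (norm x)\<^sup>2)"

text \<open>Matrix of the Klein metric at x:  g(X,Y) = X . (G x *v Y).\<close>
definition klein_matrix :: "real^'n \<Rightarrow> real^'n^'n" where
  "klein_matrix x = (\<chi> i j. (if i = j then 1 else 0) / (L x)\<^sup>2 + x$i * x$j / (L x) ^ 4)"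

text \<open>A hyperplane section l of the ball is given by data (u, c) with u \<noteq> 0:
  l = ball 0 1 \<inter> {x. u . x = c}.\<close>
definition hsec :: "real^'n \<Rightarrow> real \<Rightarrow> (real^'n) set" where
  "hsec u c = ball 0 1 \<inter> {x. u \<bullet> x = c}"

text \<open>p_l: Euclidean orthogonal projection of 0 onto l.\<close>
definition hsec_p :: "real^'n \<Rightarrow> real \<Rightarrow> real^'n" where
  "hsec_p u c = (c / (norm u)\<^sup>2) *\<^sub>R u"

text \<open>n_l = p_l/|p_l|; if 0 \<in> l (c = 0) the side l^+ is the one u points into
  (the arbitrary choice is covered by replacing u with -u).\<close>
definition hsec_n :: "real^'n \<Rightarrow> real \<Rightarrow> real^'n" where
  "hsec_n u c = (if c = 0 then (1 / norm u) *\<^sub>R u else (1 / norm (hsec_p u c)) *\<^sub>R hsec_p u c)"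

text \<open>l^+: the component of B^d - l not containing 0.\<close>
definition hsec_plus :: "real^'n \<Rightarrow> real \<Rightarrow> (real^'n) set" where
  "hsec_plus u c = ball 0 1 \<inter> {x. hsec_n u c \<bullet> x > hsec_n u c \<bullet> hsec_p u c}"

definition hsec_canon :: "real^'n \<Rightarrow> real \<Rightarrow> real^'n \<Rightarrow> real" where
  "hsec_canon u c x = (1 / L (hsec_p u c)) * ((x - hsec_p u c) \<bullet> hsec_n u c)"

definition affine_fun :: "(real^'n \<Rightarrow> real) \<Rightarrow> bool" where
  "affine_fun f \<longleftrightarrow> (\<exists>a b. \<forall>x. f x = a \<bullet> x + b)"

definition is_wedge ::
  "real^'n \<Rightarrow> real \<Rightarrow> (real^'n \<Rightarrow> real) \<Rightarrow> (real^'n \<Rightarrow> real) \<Rightarrow> (real^'n \<Rightarrow> real) \<Rightarrow> real \<Rightarrow> bool" where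
  "is_wedge u c h hm hp \<alpha> \<longleftrightarrow>
     affine_fun hm \<and> affine_fun hp \<and>
     (\<forall>x \<in> hsec u c. hm x = hp x) \<and>
     continuous_on (ball 0 1) h \<and>
     (\<forall>x \<in> ball 0 1. h x = hm x + (hp x - hm x) * indicator (hsec_plus u c) x) \<and>
     (\<forall>x \<in> ball 0 1. hp x - hm x = \<alpha> * hsec_canon u c x)"

text \<open>(d-1)-dimensional Euclidean (Lebesgue/Hausdorff) measure on the affine
  hyperplane {y. n . y = c}, n a unit vector: the measure of A is the Lebesgue
  measure of the unit-height cylinder over A along n (Fubini).\<close>
definition hyperplane_measure :: "real^'n \<Rightarrow> real \<Rightarrow> (real^'n) measure" where
  "hyperplane_measure n c = measure_of UNIV (sets borel)
     (\<lambda>A. emeasure lborel {y + t *\<^sub>R n | y t. y \<in> A \<and> n \<bullet> y = c \<and> t \<in> {0..1}})"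

definition perp_proj :: "real^'n \<Rightarrow> real^'n^'n" where
  "perp_proj n = (\<chi> i j. (if i = j then 1 else 0) - n$i * n$j)"

text \<open>Riemannian volume density of the metric induced by the Klein metric on the
  hyperplane with unit normal n, relative to Euclidean hypersurface measure:
  sqrt of the Gram determinant of g_x restricted to n^\<bottom> in an orthonormal basis,
  computed as det (P G P + n n^T), which is block-diagonal (G|n^\<bottom>, 1) in an
  orthonormal basis adapted to n^\<bottom> \<oplus> R n.\<close>
definition induced_vol_density :: "real^'n \<Rightarrow> real^'n \<Rightarrow> real" where
  "induced_vol_density n x =
     sqrt (det (perp_proj n ** klein_matrix x ** perp_proj n + (\<chi> i j. n$i * n$j)))"

definition omega :: "real^'n \<Rightarrow> real \<Rightarrow> (real^'n) measure" where
  "omega u c = density (hyperplane_measure (hsec_n u c) (hsec_n u c \<bullet> hsec_p u c))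
      (\<lambda>x. indicator (hsec u c) x * ennreal (induced_vol_density (hsec_n u c) x))"

definition partial :: "'n \<Rightarrow> (real^'n \<Rightarrow> real) \<Rightarrow> real^'n \<Rightarrow> real" where
  "partial i f x = deriv (\<lambda>t. f (x + t *\<^sub>R axis i 1)) 0"

fun iter_partial :: "'n list \<Rightarrow> (real^'n \<Rightarrow> real) \<Rightarrow> real^'n \<Rightarrow> real" where
  "iter_partial [] f = f"
| "iter_partial (i # is) f = partial i (iter_partial is f)"

definition smooth_fun :: "(real^'n \<Rightarrow> real) \<Rightarrow> bool" where
  "smooth_fun f \<longleftrightarrow> (\<forall>is. continuous_on UNIV (iter_partial is f) \<and>
      (\<forall>i x. (\<lambda>t. iter_partial is f (x + t *\<^sub>R axis i 1)) differentiable (at 0)))"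

definition test_fun :: "(real^'n \<Rightarrow> real) \<Rightarrow> bool" where
  "test_fun \<phi> \<longleftrightarrow> smooth_fun \<phi> \<and> compact (closure {x. \<phi> x \<noteq> 0}) \<and>
      closure {x. \<phi> x \<noteq> 0} \<subseteq> ball 0 1"

definition mm_coeff :: "'n \<Rightarrow> 'n \<Rightarrow> real^'n \<Rightarrow> real" where
  "mm_coeff i j x = ((if i = j then 1 else 0) - x$i * x$j) / (L x) ^ CARD('n)"

text \<open>Pairing of the distribution \<Sum>_ij mm_coeff_ij \<partial>_ij h with a test function \<phi>:
  \<Sum>_ij \<langle>\<partial>_ij h, mm_coeff_ij \<phi>\<rangle> = \<Sum>_ij \<integral>_B h \<partial>_ij (mm_coeff_ij \<phi>) dx.\<close>
definition mm_pairing :: "(real^'n \<Rightarrow> real) \<Rightarrow> (real^'n \<Rightarrow> real) \<Rightarrow> real" where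
  "mm_pairing h \<phi> = (\<Sum>i\<in>UNIV. \<Sum>j\<in>UNIV.
      LINT x : ball 0 1 | lborel. h x * iter_partial [i, j] (\<lambda>y. mm_coeff i j y * \<phi> y) x)"

text \<open>\<mu> is the mean curvature measure MM(h): a Radon measure on B^d (Borel, carried
  by B^d, finite on compact subsets of B^d) representing the distribution above.\<close>
definition is_MM :: "(real^'n \<Rightarrow> real) \<Rightarrow> (real^'n) measure \<Rightarrow> bool" where
  "is_MM h \<mu> \<longleftrightarrow> sets \<mu> = sets borel \<and> emeasure \<mu> (- ball 0 1) = 0 \<and>
     (\<forall>K. compact K \<and> K \<subseteq> ball 0 1 \<longrightarrow> emeasure \<mu> K < \<infinity>) \<and>
     (\<forall>\<phi>. test_fun \<phi> \<longrightarrow> integrable \<mu> \<phi> \<and> integral\<^sup>L \<mu> \<phi> = mm_pairing h \<phi>)"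

end

theory Submission
  imports Defs
begin

definition outer :: "real^'n \<Rightarrow> real^'n \<Rightarrow> real^'n^'n" where
  "outer u v = (\<chi> i j. u$i * v$j)"

lemma det_row_k:
  fixes v :: "real^'n"
  shows "det ((\<chi> i. if i = k then v else axis i 1) :: real^'n^'n) = v$k"
proof -
  let ?A = "(\<chi> i. if i = k then v$k *s axis k 1 else axis i 1) :: real^'n^'n"
  have detA: "det ?A = v$k"
  proof -
    have "det ?A = v$k * det ((\<chi> i. if i = k then axis k 1 else axis i 1) :: real^'n^'n)"
      by (rule det_row_mul)
    also have "((\<chi> i. if i = k then axis k 1 else axis i 1) :: real^'n^'n) = (mat 1 :: real^'n^'n)"
      by (simp add: vec_eq_iff mat_def axis_def)
    finally show ?thesis by simp
  qed
  have x: "v - v$k *s axis k 1 \<in> vec.span {row j ?A |j. j \<noteq> k}"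
  proof -
    have "v - v$k *s axis k 1 = (\<Sum>j\<in>UNIV - {k}. v$j *s axis j 1)"
    proof -
      have "v = (\<Sum>j\<in>UNIV. v$j *s axis j 1)"
      proof -
        have "(\<Sum>x\<in>UNIV. v $ x * (if i = x then 1 else 0)) = (\<Sum>x\<in>UNIV. if i = x then v$x else 0)" for i
          by (rule sum.cong) auto
        then show ?thesis by (simp add: vec_eq_iff sum_component axis_def)
      qed
      also have "\<dots> = v$k *s axis k 1 + (\<Sum>j\<in>UNIV - {k}. v$j *s axis j 1)"
        by (simp add: sum.remove)
      finally show ?thesis by (simp add: diff_eq_eq add.commute)
    qed
    also have "\<dots> \<in> vec.span {row j ?A |j. j \<noteq> k}"
    proof (rule vec.span_sum)
      fix j assume "j \<in> UNIV - {k}"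
      then have "axis j 1 \<in> {row j ?A |j. j \<noteq> k}"
        by (auto simp: row_def)
      then show "v$j *s axis j 1 \<in> vec.span {row j ?A |j. j \<noteq> k}"
        by (simp add: vec.span_base vec.span_scale)
    qed
    finally show ?thesis .
  qed
  have "det (\<chi> i. if i = k then row k ?A + (v - v$k *s axis k 1) else row i ?A) = det ?A"
    by (rule det_row_span[OF x])
  moreover have "(\<chi> i. if i = k then row k ?A + (v - v$k *s axis k 1) else row i ?A) =
      ((\<chi> i. if i = k then v else axis i 1) :: real^'n^'n)"
    by (simp add: vec_eq_iff row_def)
  ultimately show ?thesis using detA by simp
qed

lemma det_rank1_aux:
  fixes u v :: "real^'n"
  assumes "finite T" "k \<notin> T"
  shows "det ((\<chi> i. if i = k then v else if i \<in> T then u$i *s v + axis i 1 else axis i 1) :: real^'n^'n) = v$k"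
  using assms
proof (induction T rule: finite_induct)
  case empty
  have "((\<chi> i. if i = k then v else if i \<in> {} then u$i *s v + axis i 1 else axis i 1) :: real^'n^'n)
     = (\<chi> i. if i = k then v else axis i 1)" by (simp add: vec_eq_iff)
  then show ?case using det_row_k[of k v] by simp
next
  case (insert j T)
  define c where "c = (\<lambda>i. if i = k then v else if i \<in> T then u$i *s v + axis i 1 else axis i 1)"
  have jk: "j \<noteq> k" using insert by auto
  have e1: "((\<chi> i. if i = k then v else if i \<in> insert j T then u$i *s v + axis i 1 else axis i 1) :: real^'n^'n)
      = (\<chi> i. if i = j then u$j *s v + axis j 1 else c i)"
    using jk by (simp add: vec_eq_iff c_def)
  have e2: "det ((\<chi> i. if i = j then u$j *s v + axis j 1 else c i) :: real^'n^'n) = det ((\<chi> i. if i = j then u$j *s v else c i) :: real^'n^'n)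
       + det ((\<chi> i. if i = j then axis j 1 else c i) :: real^'n^'n)"
    by (rule det_row_add)
  have e3: "det ((\<chi> i. if i = j then u$j *s v else c i) :: real^'n^'n) = u$j * det ((\<chi> i. if i = j then v else c i) :: real^'n^'n)"
    by (rule det_row_mul)
  have e4: "det ((\<chi> i. if i = j then v else c i) :: real^'n^'n) = 0"
    by (rule det_identical_rows[OF jk]) (use jk in \<open>simp add: row_def vec_eq_iff c_def\<close>)
  have e5: "((\<chi> i. if i = j then axis j 1 else c i) :: real^'n^'n) =
      (\<chi> i. if i = k then v else if i \<in> T then u$i *s v + axis i 1 else axis i 1)"
    using jk insert by (auto simp: vec_eq_iff c_def)
  show ?case using insert unfolding e1 e2 e3 e4 e5 by simp
qed

lemma det_rank1_aux2:
  fixes u v :: "real^'n"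
  assumes "finite T"
  shows "det ((\<chi> i. if i \<in> T then u$i *s v + axis i 1 else axis i 1) :: real^'n^'n) = 1 + (\<Sum>i\<in>T. u$i * v$i)"
  using assms
proof (induction T rule: finite_induct)
  case empty
  have "((\<chi> i. if i \<in> {} then u$i *s v + axis i 1 else axis i 1) :: real^'n^'n) = mat 1" by (simp add: vec_eq_iff mat_def axis_def)
  then show ?case by simp
next
  case (insert k T)
  define c where "c = (\<lambda>i. if i \<in> T then u$i *s v + axis i 1 else axis i 1)"
  have e1: "((\<chi> i. if i \<in> insert k T then u$i *s v + axis i 1 else axis i 1) :: real^'n^'n)
      = (\<chi> i. if i = k then u$k *s v + axis k 1 else c i)"
    by (simp add: vec_eq_iff c_def)
  have e2: "det ((\<chi> i. if i = k then u$k *s v + axis k 1 else c i) :: real^'n^'n) = det ((\<chi> i. if i = k then u$k *s v else c i) :: real^'n^'n)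
       + det ((\<chi> i. if i = k then axis k 1 else c i) :: real^'n^'n)"
    by (rule det_row_add)
  have e3: "det ((\<chi> i. if i = k then u$k *s v else c i) :: real^'n^'n) = u$k * det ((\<chi> i. if i = k then v else c i) :: real^'n^'n)"
    by (rule det_row_mul)
  have e4: "det ((\<chi> i. if i = k then v else c i) :: real^'n^'n) = v$k"
    unfolding c_def by (rule det_rank1_aux) (use insert in auto)
  have e5: "((\<chi> i. if i = k then axis k 1 else c i) :: real^'n^'n) = (\<chi> i. c i)"
    using insert by (auto simp: vec_eq_iff c_def)
  have e6: "det ((\<chi> i. c i) :: real^'n^'n) = 1 + (\<Sum>i\<in>T. u$i * v$i)"
    using insert.IH unfolding c_def by simp
  show ?case using insert unfolding e1 e2 e3 e4 e5 e6 by simp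
qed

lemma det_rank1: "det (mat 1 + outer u v) = 1 + u \<bullet> (v::real^'n)"
proof -
  have "mat 1 + outer u v = ((\<chi> i. if i \<in> UNIV then u$i *s v + axis i 1 else axis i 1) :: real^'n^'n)"
    by (simp add: vec_eq_iff outer_def mat_def axis_def)
  then show ?thesis using det_rank1_aux2[of UNIV u v] by (simp add: inner_vec_def)
qed


lemma outer_mv: "outer u v *v y = (v \<bullet> y) *\<^sub>R (u::real^'n)"
  by (simp add: vec_eq_iff outer_def matrix_vector_mult_def inner_vec_def sum_distrib_left mult_ac)

lemma det_scaleR_mat: "det (c *\<^sub>R (X::real^'n^'n)) = c ^ CARD('n) * det X"
proof -
  have "c *\<^sub>R X = (\<chi> i. c *s row i X)" by (simp add: vec_eq_iff row_def)
  then show ?thesis using det_rows_mul[of "\<lambda>_. c" "\<lambda>i. row i X"] by (simp add: row_def)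
qed

lemma perp_proj_mv: "perp_proj m *v y = y - (m \<bullet> y) *\<^sub>R (m::real^'n)"
proof -
  have "perp_proj m = mat 1 - outer m m" by (simp add: vec_eq_iff perp_proj_def outer_def mat_def)
  then show ?thesis by (simp add: matrix_vector_mult_diff_rdistrib outer_mv)
qed

lemma klein_mv:
  "klein_matrix x *v y = (1 / (L x)\<^sup>2) *\<^sub>R y + ((x \<bullet> y) / (L x)^4) *\<^sub>R (x::real^'n)"
proof -
  have "klein_matrix x = (1 / (L x)\<^sup>2) *\<^sub>R mat 1 + (1 / (L x)^4) *\<^sub>R outer x x"
    by (simp add: vec_eq_iff klein_matrix_def outer_def mat_def)
  then show ?thesis
    by (simp add: matrix_vector_mult_add_rdistrib outer_mv flip: scaleR_matrix_vector_assoc)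
qed

lemma density_formula:
  fixes m x :: "real^'n"
  assumes m: "norm m = 1" and xs: "m \<bullet> x = s" and x1: "norm x < 1"
  shows "induced_vol_density m x = sqrt (1 - s\<^sup>2) / (L x) ^ CARD('n)"
proof -
  define l where "l = 1 - (norm x)\<^sup>2"
  have l0: "l > 0" using x1 by (simp add: l_def abs_square_less_1)
  have L2: "(L x)\<^sup>2 = l" using l0 by (simp add: L_def l_def)
  have "(L x)^4 = ((L x)\<^sup>2)\<^sup>2" by (simp flip: power_mult)
  then have L4: "(L x)^4 = l\<^sup>2" using L2 by simp
  have mm: "m \<bullet> m = 1" using m by (simp add: dot_square_norm)
  define w where "w = x - s *\<^sub>R m"
  have mw: "m \<bullet> w = 0" by (simp add: w_def inner_diff_right xs mm)
  define A where "A = (1 / l) *\<^sub>R (mat 1 + outer ((l - 1) *\<^sub>R m) m)"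
  define B where "B = mat 1 + outer ((1 / l) *\<^sub>R w) w"
  have mnn: "(\<chi> i j. m$i * m$j) = outer m m" by (simp add: outer_def)
  have M: "perp_proj m ** klein_matrix x ** perp_proj m + (\<chi> i j. m$i * m$j) = A ** B"
  proof (subst matrix_eq, intro allI)
    fix y :: "real^'n"
    have "(perp_proj m ** klein_matrix x ** perp_proj m + (\<chi> i j. m$i * m$j)) *v y
        = perp_proj m *v (klein_matrix x *v (perp_proj m *v y)) + (m \<bullet> y) *\<^sub>R m"
      by (simp add: matrix_vector_mult_add_rdistrib mnn outer_mv flip: matrix_vector_mul_assoc)
    also have "\<dots> = (1/l) *\<^sub>R y + ((w \<bullet> y) / l\<^sup>2) *\<^sub>R w + ((l - 1) / l * (m \<bullet> y)) *\<^sub>R m"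
      using l0 mm xs
      by (simp add: perp_proj_mv klein_mv L2 L4 w_def inner_diff_right inner_diff_left inner_commute
            algebra_simps field_simps scaleR_diff_right)
        (simp add: vec_eq_iff, simp add: field_simps power2_eq_square)
    also have "\<dots> = (A ** B) *v y"
      using l0 mm mw
      by (simp add: A_def B_def outer_mv matrix_vector_mult_add_rdistrib inner_add_right
          flip: matrix_vector_mul_assoc scaleR_matrix_vector_assoc)
        (simp add: algebra_simps field_simps inner_commute, simp add: vec_eq_iff, simp add: field_simps power2_eq_square)
    finally show "(perp_proj m ** klein_matrix x ** perp_proj m + (\<chi> i j. m$i * m$j)) *v y = (A ** B) *v y" .
  qed
  have dA: "det A = (1/l) ^ CARD('n) * l"
    unfolding A_def det_scaleR_mat det_rank1 using mm by simp
  have ww: "w \<bullet> w = (norm x)\<^sup>2 - s\<^sup>2"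
    by (simp add: w_def inner_diff_left inner_diff_right xs mm inner_commute power2_eq_square) (metis dot_square_norm power2_eq_square)
  have dB: "det B = 1 + (w \<bullet> w) / l"
    unfolding B_def det_rank1 by simp
  have "det (perp_proj m ** klein_matrix x ** perp_proj m + (\<chi> i j. m$i * m$j)) = (1 - s\<^sup>2) / l ^ CARD('n)"
    unfolding M det_mul dA dB ww using l0 by (simp add: l_def field_simps power_divide)
  moreover have "sqrt (l ^ CARD('n)) = (L x) ^ CARD('n)"
    using l0 by (simp add: L_def l_def real_sqrt_power)
  ultimately show ?thesis unfolding induced_vol_density_def by (simp add: real_sqrt_divide)
qed


definition Pm :: "real^'n \<Rightarrow> real \<Rightarrow> real^'n \<Rightarrow> real^'n" where
  "Pm m c x = x - (m \<bullet> x - c) *\<^sub>R m"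

definition slab :: "real^'n \<Rightarrow> real \<Rightarrow> (real^'n) set" where
  "slab m c = {x. 0 \<le> m \<bullet> x - c \<and> m \<bullet> x - c \<le> 1}"

lemma slab_borel[measurable]: "slab m c \<in> sets borel"
  unfolding slab_def by measurable

lemma Pm_measurable[measurable]: "Pm m c \<in> borel_measurable borel"
  unfolding Pm_def by measurable

lemma cyl_eq:
  assumes m: "norm m = 1"
  shows "{y + t *\<^sub>R m |y t. y \<in> A \<and> m \<bullet> y = c \<and> t \<in> {0..1}} = Pm m c -` A \<inter> slab m c"
proof -
  have mm: "m \<bullet> m = 1" using m by (simp add: dot_square_norm)
  show ?thesis
  proof (intro set_eqI iffI)
    fix x assume "x \<in> {y + t *\<^sub>R m |y t. y \<in> A \<and> m \<bullet> y = c \<and> t \<in> {0..1}}"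
    then obtain y t where "x = y + t *\<^sub>R m" "y \<in> A" "m \<bullet> y = c" "t \<in> {0..1}" by blast
    then show "x \<in> Pm m c -` A \<inter> slab m c"
      using mm by (auto simp: Pm_def slab_def inner_add_right)
  next
    fix x assume x: "x \<in> Pm m c -` A \<inter> slab m c"
    have "x = Pm m c x + (m \<bullet> x - c) *\<^sub>R m" "m \<bullet> Pm m c x = c"
      using mm by (auto simp: Pm_def inner_diff_right)
    then show "x \<in> {y + t *\<^sub>R m |y t. y \<in> A \<and> m \<bullet> y = c \<and> t \<in> {0..1}}"
      using x by (auto simp: slab_def intro!: exI[of _ "Pm m c x"] exI[of _ "m \<bullet> x - c"])
  qed
qed

lemma emeasure_density_indicator:
  assumes "B \<in> sets borel" "S \<in> sets borel"
  shows "emeasure (density lborel (indicator S)) B = emeasure lborel (B \<inter> (S::'a::euclidean_space set))"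
proof -
  have "emeasure (density lborel (indicator S)) B = (\<integral>\<^sup>+x. indicator S x * indicator B x \<partial>lborel)"
    using assms by (subst emeasure_density) auto
  also have "\<dots> = (\<integral>\<^sup>+x. indicator (B \<inter> S) x \<partial>lborel)"
    by (intro nn_integral_cong) (auto simp: indicator_def)
  also have "\<dots> = emeasure lborel (B \<inter> S)"
    using assms by (intro nn_integral_indicator) auto
  finally show ?thesis .
qed

lemma hm_eq:
  fixes m :: "real^'n"
  assumes m: "norm m = 1"
  shows "hyperplane_measure m c = distr (density lborel (indicator (slab m c))) borel (Pm m c)"
    (is "_ = ?N")
proof -
  have "hyperplane_measure m c = measure_of UNIV (sets borel) (emeasure ?N)"
    unfolding hyperplane_measure_def
  proof (rule measure_of_eq)
    fix a :: "(real^'n) set" assume "a \<in> sigma_sets UNIV (sets borel)"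
    then have a: "a \<in> sets borel" by (metis sets.sigma_sets_eq space_borel)
    have pa: "Pm m c -` a \<in> sets borel" using measurable_sets[OF Pm_measurable a] by simp
    have "emeasure ?N a = emeasure (density lborel (indicator (slab m c))) (Pm m c -` a)"
      using a by (simp add: emeasure_distr)
    also have "\<dots> = emeasure lborel (Pm m c -` a \<inter> slab m c)"
      using pa by (rule emeasure_density_indicator) simp
    finally show "emeasure lborel {y + t *\<^sub>R m |y t. y \<in> a \<and> m \<bullet> y = c \<and> t \<in> {0..1}} = emeasure ?N a"
      using cyl_eq[OF m] by simp
  qed auto
  also have "\<dots> = ?N"
    using measure_of_of_measure[of ?N] by simp
  finally show ?thesis .
qed

lemma nn_integral_hm:
  assumes m: "norm m = 1" and f[measurable]: "f \<in> borel_measurable borel"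
  shows "(\<integral>\<^sup>+y. f y \<partial>hyperplane_measure m c) = (\<integral>\<^sup>+x. indicator (slab m c) x * f (Pm m c x) \<partial>lborel)"
  unfolding hm_eq[OF m] by (simp add: nn_integral_distr nn_integral_density)

lemma nn_integral_lborel_transl:
  fixes g :: "real^'n \<Rightarrow> ennreal"
  assumes [measurable]: "g \<in> borel_measurable borel"
  shows "(\<integral>\<^sup>+x. g x \<partial>lborel) = (\<integral>\<^sup>+x. g (a + x) \<partial>lborel)"
proof -
  have "(\<integral>\<^sup>+x. g x \<partial>lborel) = (\<integral>\<^sup>+x. g x \<partial>distr lborel borel ((+) a))"
    by (simp add: lborel_distr_plus)
  also have "\<dots> = (\<integral>\<^sup>+x. g (a + x) \<partial>lborel)"
    by (simp add: nn_integral_distr)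
  finally show ?thesis .
qed

lemma nn_integral_lborel_transl1:
  fixes g :: "real \<Rightarrow> ennreal"
  assumes [measurable]: "g \<in> borel_measurable borel"
  shows "(\<integral>\<^sup>+x. g x \<partial>lborel) = (\<integral>\<^sup>+x. g (a + x) \<partial>lborel)"
  using nn_integral_real_affine[of g 1 a] by simp

lemma core_nn:
  fixes m v :: "real^'n" and f :: "real^'n \<Rightarrow> ennreal"
  assumes m: "norm m = 1" and mv: "m \<bullet> v \<noteq> 0" and f[measurable]: "f \<in> borel_measurable borel"
  shows "(\<integral>\<^sup>+x. f x \<partial>lborel) =
    ennreal \<bar>m \<bullet> v\<bar> * (\<integral>\<^sup>+y. (\<integral>\<^sup>+t. f (y + t *\<^sub>R v) \<partial>lborel) \<partial>hyperplane_measure m c)"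
proof -
  have mm: "m \<bullet> m = 1" using m by (simp add: dot_square_norm)
  define S where "S = slab m c"
  define P where "P = Pm m c"
  define \<beta> where "\<beta> = m \<bullet> v"
  define w where "w = v - \<beta> *\<^sub>R m"
  have mw: "m \<bullet> w = 0" by (simp add: w_def \<beta>_def inner_diff_right mm)
  have [measurable]: "S \<in> sets borel" "P \<in> borel_measurable borel" by (simp_all add: S_def P_def)
  define K where "K = (\<lambda>r. \<integral>\<^sup>+x. indicator S x * f (P x + r *\<^sub>R m) \<partial>lborel)"
  have [measurable]: "K \<in> borel_measurable borel"
    unfolding K_def by measurable
  have "(\<integral>\<^sup>+y. (\<integral>\<^sup>+t. f (y + t *\<^sub>R v) \<partial>lborel) \<partial>hyperplane_measure m c)
      = (\<integral>\<^sup>+x. indicator S x * (\<integral>\<^sup>+t. f (P x + t *\<^sub>R v) \<partial>lborel) \<partial>lborel)"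
    unfolding S_def P_def by (rule nn_integral_hm[OF m]) measurable
  also have "\<dots> = (\<integral>\<^sup>+x. (\<integral>\<^sup>+t. indicator S x * f (P x + t *\<^sub>R v) \<partial>lborel) \<partial>lborel)"
    by (intro nn_integral_cong) (simp add: nn_integral_cmult)
  also have "\<dots> = (\<integral>\<^sup>+t. (\<integral>\<^sup>+x. indicator S x * f (P x + t *\<^sub>R v) \<partial>lborel) \<partial>lborel)"
    by (rule lborel_pair.Fubini'[symmetric]) measurable
  also have "\<dots> = (\<integral>\<^sup>+t. K (\<beta> * t) \<partial>lborel)"
  proof (rule nn_integral_cong)
    fix t :: real
    have "(\<integral>\<^sup>+x. indicator S x * f (P x + (\<beta> * t) *\<^sub>R m) \<partial>lborel)
        = (\<integral>\<^sup>+x. indicator S (t *\<^sub>R w + x) * f (P (t *\<^sub>R w + x) + (\<beta> * t) *\<^sub>R m) \<partial>lborel)"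
      by (rule nn_integral_lborel_transl) measurable
    also have "\<dots> = (\<integral>\<^sup>+x. indicator S x * f (P x + t *\<^sub>R v) \<partial>lborel)"
    proof (rule nn_integral_cong)
      fix x :: "real^'n"
      have "indicator S (t *\<^sub>R w + x) = (indicator S x :: ennreal)"
        using mw by (simp add: S_def slab_def indicator_def inner_add_right)
      moreover have "P (t *\<^sub>R w + x) + (\<beta> * t) *\<^sub>R m = P x + t *\<^sub>R v"
        using mw by (simp add: P_def Pm_def w_def inner_add_right algebra_simps)
      ultimately show "indicator S (t *\<^sub>R w + x) * f (P (t *\<^sub>R w + x) + (\<beta> * t) *\<^sub>R m) = indicator S x * f (P x + t *\<^sub>R v)"
        by simp
    qed
    finally show "(\<integral>\<^sup>+x. indicator S x * f (P x + t *\<^sub>R v) \<partial>lborel) = K (\<beta> * t)"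
      unfolding K_def by simp
  qed
  finally have R: "ennreal \<bar>\<beta>\<bar> * (\<integral>\<^sup>+y. (\<integral>\<^sup>+t. f (y + t *\<^sub>R v) \<partial>lborel) \<partial>hyperplane_measure m c)
      = (\<integral>\<^sup>+r. K r \<partial>lborel)"
    using nn_integral_real_affine[of K \<beta> 0] mv unfolding \<beta>_def by simp
  have "(\<integral>\<^sup>+r. K r \<partial>lborel) = (\<integral>\<^sup>+x. (\<integral>\<^sup>+r. indicator S x * f (P x + r *\<^sub>R m) \<partial>lborel) \<partial>lborel)"
    unfolding K_def by (rule lborel_pair.Fubini') measurable
  also have "\<dots> = (\<integral>\<^sup>+x. (\<integral>\<^sup>+r. indicator S x * f (x + r *\<^sub>R m) \<partial>lborel) \<partial>lborel)"
  proof (rule nn_integral_cong)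
    fix x :: "real^'n"
    have "(\<integral>\<^sup>+r. indicator S x * f (x + r *\<^sub>R m) \<partial>lborel)
       = (\<integral>\<^sup>+r. indicator S x * f (x + (- (m \<bullet> x - c) + r) *\<^sub>R m) \<partial>lborel)"
      by (rule nn_integral_lborel_transl1) measurable
    also have "\<dots> = (\<integral>\<^sup>+r. indicator S x * f (P x + r *\<^sub>R m) \<partial>lborel)"
      by (simp add: P_def Pm_def algebra_simps)
    finally show "(\<integral>\<^sup>+r. indicator S x * f (P x + r *\<^sub>R m) \<partial>lborel) = (\<integral>\<^sup>+r. indicator S x * f (x + r *\<^sub>R m) \<partial>lborel)"
      by simp
  qed
  also have "\<dots> = (\<integral>\<^sup>+r. (\<integral>\<^sup>+x. indicator S x * f (x + r *\<^sub>R m) \<partial>lborel) \<partial>lborel)"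
    by (rule lborel_pair.Fubini'[symmetric]) measurable
  also have "\<dots> = (\<integral>\<^sup>+r. (\<integral>\<^sup>+x. indicator S (x - r *\<^sub>R m) * f x \<partial>lborel) \<partial>lborel)"
  proof (rule nn_integral_cong)
    fix r :: real
    show "(\<integral>\<^sup>+x. indicator S x * f (x + r *\<^sub>R m) \<partial>lborel) = (\<integral>\<^sup>+x. indicator S (x - r *\<^sub>R m) * f x \<partial>lborel)"
      by (subst nn_integral_lborel_transl[where a="r *\<^sub>R m"]) (measurable, simp add: add.commute)
  qed
  also have "\<dots> = (\<integral>\<^sup>+x. (\<integral>\<^sup>+r. indicator S (x - r *\<^sub>R m) * f x \<partial>lborel) \<partial>lborel)"
    by (rule lborel_pair.Fubini') measurable
  also have "\<dots> = (\<integral>\<^sup>+x. f x \<partial>lborel)"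
  proof (rule nn_integral_cong)
    fix x :: "real^'n"
    have "(\<integral>\<^sup>+r. indicator S (x - r *\<^sub>R m) * f x \<partial>lborel) = (\<integral>\<^sup>+r. indicator {m \<bullet> x - c - 1 .. m \<bullet> x - c} r \<partial>lborel) * f x"
      using mm by (subst nn_integral_multc[symmetric]) (auto intro!: nn_integral_cong simp: S_def slab_def indicator_def inner_diff_right)
    also have "\<dots> = f x" by simp
    finally show "(\<integral>\<^sup>+r. indicator S (x - r *\<^sub>R m) * f x \<partial>lborel) = f x" .
  qed
  finally show ?thesis using R unfolding \<beta>_def by simp
qed

lemma sets_hm[measurable_cong]: "sets (hyperplane_measure m c) = sets borel"
  unfolding hyperplane_measure_def by (simp add: sets_measure_of_conv) (metis sets.sigma_sets_eq space_borel)

lemma space_hm[simp]: "space (hyperplane_measure m c) = UNIV"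
  unfolding hyperplane_measure_def by simp

lemma integrable_bdd_supp:
  fixes g :: "'a::euclidean_space \<Rightarrow> real"
  assumes [measurable]: "g \<in> borel_measurable borel" and B: "\<And>x. \<bar>g x\<bar> \<le> B"
    and R: "\<And>x. norm x > R \<Longrightarrow> g x = 0"
  shows "integrable lborel g"
proof (rule integrableI_bounded_set[where A="cball 0 R" and B=B])
  show "emeasure lborel (cball 0 R) < \<infinity>" by (rule emeasure_bounded_finite) simp
  show "AE x in lborel. x \<notin> cball 0 R \<longrightarrow> g x = 0" using R by (auto simp: dist_norm)
qed (use B in auto)

lemma line_supp:
  fixes y v :: "real^'n"
  assumes v: "v \<noteq> 0" and R: "\<And>x. norm x > R \<Longrightarrow> f x = 0"
  shows "\<bar>t\<bar> > (R + norm y) / norm v \<Longrightarrow> f (y + t *\<^sub>R v) = 0"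
proof -
  assume t: "\<bar>t\<bar> > (R + norm y) / norm v"
  have nv: "norm v > 0" using v by simp
  have "R + norm y < \<bar>t\<bar> * norm v" using t nv by (simp add: field_simps)
  also have "\<bar>t\<bar> * norm v \<le> norm (y + t *\<^sub>R v) + norm y"
    using norm_triangle_ineq4[of "y + t *\<^sub>R v" y] by simp
  finally show ?thesis using R by simp
qed

lemma line_integrable:
  fixes y v :: "real^'n" and f :: "real^'n \<Rightarrow> real"
  assumes v: "v \<noteq> 0" and [measurable]: "f \<in> borel_measurable borel"
    and B: "\<And>x. \<bar>f x\<bar> \<le> B" and R: "\<And>x. norm x > R \<Longrightarrow> f x = 0"
  shows "integrable lborel (\<lambda>t. f (y + t *\<^sub>R v))"
  by (rule integrable_bdd_supp[where B=B and R="(R + norm y) / norm v"])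
     (use B line_supp[OF v R] in auto)

lemma core_int_nonneg:
  fixes m v :: "real^'n" and f :: "real^'n \<Rightarrow> real"
  assumes m: "norm m = 1" and mv: "m \<bullet> v \<noteq> 0" and f[measurable]: "f \<in> borel_measurable borel"
    and nn: "\<And>x. f x \<ge> 0" and B: "\<And>x. \<bar>f x\<bar> \<le> B" and R: "\<And>x. norm x > R \<Longrightarrow> f x = 0"
  shows "integral\<^sup>L lborel f = \<bar>m \<bullet> v\<bar> * (\<integral>y. (\<integral>t. f (y + t *\<^sub>R v) \<partial>lborel) \<partial>hyperplane_measure m c)"
    and "integrable (hyperplane_measure m c) (\<lambda>y. \<integral>t. f (y + t *\<^sub>R v) \<partial>lborel)"
proof -
  have v: "v \<noteq> 0" using mv by auto
  define I where "I = (\<lambda>y. \<integral>\<^sup>+t. ennreal (f (y + t *\<^sub>R v)) \<partial>lborel)"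
  have [measurable]: "I \<in> borel_measurable borel" unfolding I_def by measurable
  have If: "I y < \<infinity>" for y
    using line_integrable[OF v f B R, where y=y] nn unfolding I_def integrable_iff_bounded by simp
  have Iint: "(\<integral>t. f (y + t *\<^sub>R v) \<partial>lborel) = enn2real (I y)" for y
    unfolding I_def using nn by (subst integral_eq_nn_integral) auto
  have core: "(\<integral>\<^sup>+x. ennreal (f x) \<partial>lborel) = ennreal \<bar>m \<bullet> v\<bar> * (\<integral>\<^sup>+y. I y \<partial>hyperplane_measure m c)"
    unfolding I_def by (rule core_nn[OF m mv]) measurable
  have fin: "(\<integral>\<^sup>+x. ennreal (f x) \<partial>lborel) < \<infinity>"
    using integrable_bdd_supp[OF f B R] nn unfolding integrable_iff_bounded by simp
  then have finI: "(\<integral>\<^sup>+y. I y \<partial>hyperplane_measure m c) < \<infinity>"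
    using core mv by (auto simp: ennreal_mult_less_top)
  have eqI: "(\<integral>\<^sup>+y. ennreal (enn2real (I y)) \<partial>hyperplane_measure m c) = (\<integral>\<^sup>+y. I y \<partial>hyperplane_measure m c)"
    using If by (intro nn_integral_cong) simp
  show "integrable (hyperplane_measure m c) (\<lambda>y. \<integral>t. f (y + t *\<^sub>R v) \<partial>lborel)"
    unfolding Iint by (rule integrableI_nonneg) (use eqI finI in auto)
  have "(\<integral>y. (\<integral>t. f (y + t *\<^sub>R v) \<partial>lborel) \<partial>hyperplane_measure m c) = enn2real (\<integral>\<^sup>+y. I y \<partial>hyperplane_measure m c)"
    unfolding Iint by (subst integral_eq_nn_integral) (use eqI in auto)
  moreover have "integral\<^sup>L lborel f = enn2real (\<integral>\<^sup>+x. ennreal (f x) \<partial>lborel)"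
    using nn by (subst integral_eq_nn_integral) auto
  ultimately show "integral\<^sup>L lborel f = \<bar>m \<bullet> v\<bar> * (\<integral>y. (\<integral>t. f (y + t *\<^sub>R v) \<partial>lborel) \<partial>hyperplane_measure m c)"
    unfolding core by (simp add: enn2real_mult)
qed

lemma core_int:
  fixes m v :: "real^'n" and f :: "real^'n \<Rightarrow> real"
  assumes m: "norm m = 1" and mv: "m \<bullet> v \<noteq> 0" and f[measurable]: "f \<in> borel_measurable borel"
    and B: "\<And>x. \<bar>f x\<bar> \<le> B" and R: "\<And>x. norm x > R \<Longrightarrow> f x = 0"
  shows "integral\<^sup>L lborel f = \<bar>m \<bullet> v\<bar> * (\<integral>y. (\<integral>t. f (y + t *\<^sub>R v) \<partial>lborel) \<partial>hyperplane_measure m c)"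
proof -
  have v: "v \<noteq> 0" using mv by auto
  define fp where "fp = (\<lambda>x. max (f x) 0)"
  define fn where "fn = (\<lambda>x. max (- f x) 0)"
  have [measurable]: "fp \<in> borel_measurable borel" "fn \<in> borel_measurable borel"
    unfolding fp_def fn_def by measurable
  have fpB: "\<bar>fp x\<bar> \<le> B" and fnB: "\<bar>fn x\<bar> \<le> B" for x using B[of x] by (auto simp: fp_def fn_def)
  have fpR: "norm x > R \<Longrightarrow> fp x = 0" and fnR: "norm x > R \<Longrightarrow> fn x = 0" for x
    using R[of x] by (auto simp: fp_def fn_def)
  have fpn: "f x = fp x - fn x" for x by (auto simp: fp_def fn_def)
  have P1: "integral\<^sup>L lborel fp = \<bar>m \<bullet> v\<bar> * (\<integral>y. (\<integral>t. fp (y + t *\<^sub>R v) \<partial>lborel) \<partial>hyperplane_measure m c)"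
    and P2: "integrable (hyperplane_measure m c) (\<lambda>y. \<integral>t. fp (y + t *\<^sub>R v) \<partial>lborel)"
    by (rule core_int_nonneg[OF m mv _ _ fpB fpR]; simp add: fp_def)+
  have N1: "integral\<^sup>L lborel fn = \<bar>m \<bullet> v\<bar> * (\<integral>y. (\<integral>t. fn (y + t *\<^sub>R v) \<partial>lborel) \<partial>hyperplane_measure m c)"
    and N2: "integrable (hyperplane_measure m c) (\<lambda>y. \<integral>t. fn (y + t *\<^sub>R v) \<partial>lborel)"
    by (rule core_int_nonneg[OF m mv _ _ fnB fnR]; simp add: fn_def)+
  have "integral\<^sup>L lborel f = integral\<^sup>L lborel fp - integral\<^sup>L lborel fn"
    unfolding fpn by (rule Bochner_Integration.integral_diff)
      (auto intro!: integrable_bdd_supp fpB fpR fnB fnR)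
  also have "\<dots> = \<bar>m \<bullet> v\<bar> * ((\<integral>y. (\<integral>t. fp (y + t *\<^sub>R v) \<partial>lborel) \<partial>hyperplane_measure m c)
         - (\<integral>y. (\<integral>t. fn (y + t *\<^sub>R v) \<partial>lborel) \<partial>hyperplane_measure m c))"
    using P1 N1 by (simp add: right_diff_distrib)
  also have "(\<integral>y. (\<integral>t. fp (y + t *\<^sub>R v) \<partial>lborel) \<partial>hyperplane_measure m c)
         - (\<integral>y. (\<integral>t. fn (y + t *\<^sub>R v) \<partial>lborel) \<partial>hyperplane_measure m c)
      = (\<integral>y. (\<integral>t. fp (y + t *\<^sub>R v) \<partial>lborel) - (\<integral>t. fn (y + t *\<^sub>R v) \<partial>lborel) \<partial>hyperplane_measure m c)"
    by (rule Bochner_Integration.integral_diff[symmetric, OF P2 N2])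
  also have "\<dots> = (\<integral>y. (\<integral>t. f (y + t *\<^sub>R v) \<partial>lborel) \<partial>hyperplane_measure m c)"
  proof (rule Bochner_Integration.integral_cong[OF refl])
    fix y
    show "(\<integral>t. fp (y + t *\<^sub>R v) \<partial>lborel) - (\<integral>t. fn (y + t *\<^sub>R v) \<partial>lborel) = (\<integral>t. f (y + t *\<^sub>R v) \<partial>lborel)"
      unfolding fpn by (rule Bochner_Integration.integral_diff[symmetric])
        (auto intro!: line_integrable[OF v _ fpB fpR] line_integrable[OF v _ fnB fnR])
  qed
  finally show ?thesis .
qed


lemma ftc_Icc:
  fixes F F' :: "real \<Rightarrow> real"
  assumes d: "\<And>t. (F has_real_derivative F' t) (at t)" and c: "continuous_on UNIV F'" and ab: "a \<le> b"
  shows "(LBINT t. indicator {a..b} t * F' t) = F b - F a"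
proof -
  have "(LBINT t. indicator {a..b} t *\<^sub>R F' t) = F b - F a"
  proof (rule integral_FTC_atLeastAtMost[OF ab])
    fix x show "(F has_vector_derivative F' x) (at x within {a..b})"
      using d[of x] by (simp add: has_real_derivative_iff_has_vector_derivative has_vector_derivative_at_within)
  next
    show "continuous_on {a..b} F'" using c by (rule continuous_on_subset) simp
  qed
  then show ?thesis by simp
qed

lemma int_Icc:
  fixes f :: "real \<Rightarrow> real"
  assumes "continuous_on UNIV f"
  shows "integrable lborel (\<lambda>t. indicator {a..b} t * f t)"
proof -
  have "integrable lborel (\<lambda>t. f t * indicator {a..b} t)"
    by (rule borel_integrable_atLeastAtMost) (use assms continuous_on_eq_continuous_at in blast)
  then show ?thesis by (simp add: mult.commute)
qed

context
  fixes g g' :: "real \<Rightarrow> real" and R :: real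
  assumes gd: "\<And>t. (g has_real_derivative g' t) (at t)"
    and gc: "continuous_on UNIV g'"
    and gs: "\<And>t. R \<le> \<bar>t\<bar> \<Longrightarrow> g t = 0"
    and gs': "\<And>t. R \<le> \<bar>t\<bar> \<Longrightarrow> g' t = 0"
    and R0: "R > 0"
begin

lemma g_cont: "continuous_on UNIV g"
  using gd by (meson DERIV_isCont continuous_at_imp_continuous_on)

lemma g_meas[measurable]: "g \<in> borel_measurable borel"
  using g_cont by (rule borel_measurable_continuous_onI)

lemma g'_meas[measurable]: "g' \<in> borel_measurable borel"
  using gc by (rule borel_measurable_continuous_onI)

lemma g_supp_Icc: "R \<le> b \<Longrightarrow> a \<le> -R \<Longrightarrow> indicator {a..b} t * g t = g t"
  using gs[of t] by (cases "t \<in> {a..b}") auto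

lemma g'_supp_Icc: "R \<le> b \<Longrightarrow> a \<le> -R \<Longrightarrow> indicator {a..b} t * g' t = g' t"
  using gs'[of t] by (cases "t \<in> {a..b}") auto

lemma L1: "(LBINT t. g' t) = 0"
proof -
  have "(LBINT t. g' t) = (LBINT t. indicator {-R..R} t * g' t)"
    by (rule Bochner_Integration.integral_cong) (auto simp: g'_supp_Icc)
  also have "\<dots> = g R - g (-R)" using R0 by (intro ftc_Icc gd gc) simp
  finally show ?thesis using gs[of R] gs[of "-R"] R0 by simp
qed

lemma L2: "(LBINT t. (A + B * t) * g' t) = - B * (LBINT t. g t)"
proof -
  define F' where "F' = (\<lambda>t. B * g t + (A + B * t) * g' t)"
  have d: "((\<lambda>t. (A + B * t) * g t) has_real_derivative F' t) (at t)" for t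
    unfolding F'_def by (rule derivative_eq_intros refl gd)+ (simp add: algebra_simps)
  have c1: "continuous_on UNIV (\<lambda>t. (A + B * t) * g' t)"
    by (intro continuous_intros gc)
  have c2: "continuous_on UNIV (\<lambda>t. B * g t)"
    by (intro continuous_intros g_cont)
  have c: "continuous_on UNIV F'" unfolding F'_def by (intro continuous_on_add c1 c2)
  have "(LBINT t. indicator {-R..R} t * F' t) = 0"
    using ftc_Icc[OF d c, of "-R" R] gs[of R] gs[of "-R"] R0 by simp
  moreover have "(LBINT t. indicator {-R..R} t * F' t) =
      (LBINT t. indicator {-R..R} t * (B * g t)) + (LBINT t. indicator {-R..R} t * ((A + B * t) * g' t))"
    unfolding F'_def distrib_left by (intro Bochner_Integration.integral_add int_Icc c1 c2)
  moreover have "(LBINT t. indicator {-R..R} t * (B * g t)) = (LBINT t. B * g t)"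
    by (rule Bochner_Integration.integral_cong) (auto simp: g_supp_Icc mult.left_commute)
  moreover have "(LBINT t. B * g t) = B * (LBINT t. g t)" by simp
  moreover have "(LBINT t. indicator {-R..R} t * ((A + B * t) * g' t)) = (LBINT t. (A + B * t) * g' t)"
    by (rule Bochner_Integration.integral_cong) (auto simp: g'_supp_Icc mult.left_commute)
  ultimately show ?thesis by linarith
qed

lemma L3: "(LBINT t. max (A + k * t) 0 * g' t) = - k * (LBINT t. indicator {t. A + k * t > 0} t * g t)"
proof -
  define F' where "F' = (\<lambda>t. k * g t + (A + k * t) * g' t)"
  have d: "((\<lambda>t. (A + k * t) * g t) has_real_derivative F' t) (at t)" for t
    unfolding F'_def by (rule derivative_eq_intros refl gd)+ (simp add: algebra_simps)
  have c1: "continuous_on UNIV (\<lambda>t. (A + k * t) * g' t)"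
    by (intro continuous_intros gc)
  have c2: "continuous_on UNIV (\<lambda>t. k * g t)"
    by (intro continuous_intros g_cont)
  have c: "continuous_on UNIV F'" unfolding F'_def by (intro continuous_on_add c1 c2)
  define t0 where "t0 = - A / k"
  have split: "(LBINT t. indicator {a..b} t * F' t) =
      (LBINT t. indicator {a..b} t * (k * g t)) + (LBINT t. indicator {a..b} t * ((A + k * t) * g' t))" for a b
    unfolding F'_def distrib_left by (intro Bochner_Integration.integral_add int_Icc c1 c2)
  consider "k = 0" | "k > 0" | "k < 0" by linarith
  then show ?thesis
  proof cases
    case 1
    have "(LBINT t. max (A + k * t) 0 * g' t) = max A 0 * (LBINT t. g' t)" using 1 by simp
    then show ?thesis using L1 1 by simp
  next
    case 2
    define b where "b = \<bar>t0\<bar> + R"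
    have b: "t0 \<le> b" "R \<le> b" using R0 by (auto simp: b_def)
    have "(LBINT t. indicator {t0..b} t * F' t) = 0"
      using ftc_Icc[OF d c b(1)] gs[of b] b R0 2 by (simp add: t0_def)
    moreover have "(LBINT t. indicator {t0..b} t * ((A + k * t) * g' t)) = (LBINT t. max (A + k * t) 0 * g' t)"
    proof (rule Bochner_Integration.integral_cong[OF refl])
      fix t
      show "indicator {t0..b} t * ((A + k * t) * g' t) = max (A + k * t) 0 * g' t"
      proof (cases "t < t0")
        case True
        then have "A + k * t < 0" using 2 by (simp add: t0_def field_simps)
        then show ?thesis using True by simp
      next
        case False
        then have "A + k * t \<ge> 0" using 2 by (simp add: t0_def field_simps)
        then show ?thesis using False gs'[of t] b by (cases "t \<le> b") auto
      qed
    qed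
    moreover have "(LBINT t. indicator {t0..b} t * (k * g t)) = k * (LBINT t. indicator {t. A + k * t > 0} t * g t)"
    proof -
      have "(LBINT t. indicator {t0..b} t * (k * g t)) = (LBINT t. k * (indicator {t. A + k * t > 0} t * g t))"
      proof (rule integral_cong_AE)
        show "AE t in lborel. indicator {t0..b} t * (k * g t) = k * (indicator {t. A + k * t > 0} t * g t)"
          using AE_lborel_singleton[of t0]
        proof eventually_elim
          fix t assume t: "t \<noteq> t0"
          have "A + k * t > 0 \<longleftrightarrow> t > t0" using 2 by (simp add: t0_def field_simps, arith)
          then show "indicator {t0..b} t * (k * g t) = k * (indicator {t. A + k * t > 0} t * g t)"
            using t gs[of t] b by (cases "t \<le> b") (auto simp: indicator_def)
        qed
      qed measurable
      then show ?thesis by simp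
    qed
    ultimately show ?thesis using split[of t0 b] by linarith
  next
    case 3
    define a where "a = - (\<bar>t0\<bar> + R)"
    have a: "a \<le> t0" "a \<le> -R" using R0 by (auto simp: a_def)
    have "(LBINT t. indicator {a..t0} t * F' t) = 0"
      using ftc_Icc[OF d c a(1)] gs[of a] a R0 3 by (simp add: t0_def)
    moreover have "(LBINT t. indicator {a..t0} t * ((A + k * t) * g' t)) = (LBINT t. max (A + k * t) 0 * g' t)"
    proof (rule Bochner_Integration.integral_cong[OF refl])
      fix t
      show "indicator {a..t0} t * ((A + k * t) * g' t) = max (A + k * t) 0 * g' t"
      proof (cases "t > t0")
        case True
        then have "A + k * t < 0" using 3 by (simp add: t0_def field_simps)
        then show ?thesis using True by simp
      next
        case False
        then have "A + k * t \<ge> 0" using 3 by (simp add: t0_def field_simps)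
        then show ?thesis using False gs'[of t] a by (cases "a \<le> t") auto
      qed
    qed
    moreover have "(LBINT t. indicator {a..t0} t * (k * g t)) = k * (LBINT t. indicator {t. A + k * t > 0} t * g t)"
    proof -
      have "(LBINT t. indicator {a..t0} t * (k * g t)) = (LBINT t. k * (indicator {t. A + k * t > 0} t * g t))"
      proof (rule integral_cong_AE)
        show "AE t in lborel. indicator {a..t0} t * (k * g t) = k * (indicator {t. A + k * t > 0} t * g t)"
          using AE_lborel_singleton[of t0]
        proof eventually_elim
          fix t assume t: "t \<noteq> t0"
          have "A + k * t > 0 \<longleftrightarrow> t < t0" using 3 by (simp add: t0_def field_simps, arith)
          then show "indicator {a..t0} t * (k * g t) = k * (indicator {t. A + k * t > 0} t * g t)"
            using t gs[of t] a by (cases "a \<le> t") (auto simp: indicator_def)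
        qed
      qed measurable
      then show ?thesis by simp
    qed
    ultimately show ?thesis using split[of a t0] by linarith
  qed
qed

lemma L4: assumes k: "k \<noteq> 0"
  shows "(LBINT t. indicator {t. k * t > 0} t * g' t) = - sgn k * g 0"
proof (cases "k > 0")
  case True
  have "(LBINT t. indicator {t. k * t > 0} t * g' t) = (LBINT t. indicator {0..R} t * g' t)"
  proof (rule integral_cong_AE)
    show "AE t in lborel. indicator {t. k * t > 0} t * g' t = indicator {0..R} t * g' t"
      using AE_lborel_singleton[of 0]
    proof eventually_elim
      fix t :: real assume t: "t \<noteq> 0"
      have "k * t > 0 \<longleftrightarrow> t > 0" using True by (simp add: zero_less_mult_iff)
      then show "indicator {t. k * t > 0} t * g' t = indicator {0..R} t * g' t"
        using t gs'[of t] by (cases "t \<le> R") (auto simp: indicator_def)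
    qed
  qed measurable
  also have "\<dots> = g R - g 0" using R0 by (intro ftc_Icc gd gc) simp
  finally show ?thesis using gs[of R] R0 True by simp
next
  case False
  then have kn: "k < 0" using k by simp
  have "(LBINT t. indicator {t. k * t > 0} t * g' t) = (LBINT t. indicator {-R..0} t * g' t)"
  proof (rule integral_cong_AE)
    show "AE t in lborel. indicator {t. k * t > 0} t * g' t = indicator {-R..0} t * g' t"
      using AE_lborel_singleton[of 0]
    proof eventually_elim
      fix t :: real assume t: "t \<noteq> 0"
      have "k * t > 0 \<longleftrightarrow> t < 0" using kn by (simp add: zero_less_mult_iff)
      then show "indicator {t. k * t > 0} t * g' t = indicator {-R..0} t * g' t"
        using t gs'[of t] by (cases "-R \<le> t") (auto simp: indicator_def)
    qed
  qed measurable
  also have "\<dots> = g 0 - g (-R)" using R0 by (intro ftc_Icc gd gc) simp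
  finally show ?thesis using gs[of "-R"] R0 kn by simp
qed

end


lemma bdd_cont_supp:
  fixes f :: "real^'n \<Rightarrow> real"
  assumes c: "continuous_on UNIV f" and s: "\<And>x. 1 \<le> norm x \<Longrightarrow> f x = 0"
  shows "\<exists>B. \<forall>x. \<bar>f x\<bar> \<le> B"
proof -
  have "compact (f ` cball 0 1)"
    by (rule compact_continuous_image) (use c continuous_on_subset in auto)
  then obtain B where B: "\<And>y. y \<in> f ` cball 0 1 \<Longrightarrow> norm y \<le> B"
    using compact_imp_bounded bounded_iff by metis
  have "\<bar>f x\<bar> \<le> max B 0" for x
  proof (cases "norm x \<le> 1")
    case True then show ?thesis using B[of "f x"] by auto
  next
    case False then show ?thesis using s[of x] by auto
  qed
  then show ?thesis by blast
qed

lemma line_deriv: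
  fixes F G :: "real^'n \<Rightarrow> real" and y e :: "real^'n"
  assumes h: "\<And>x. ((\<lambda>t. F (x + t *\<^sub>R e)) has_real_derivative G x) (at 0)"
  shows "((\<lambda>t. F (y + t *\<^sub>R e)) has_real_derivative G (y + t *\<^sub>R e)) (at t)"
proof -
  have "((\<lambda>s. F ((y + t *\<^sub>R e) + s *\<^sub>R e)) has_real_derivative G (y + t *\<^sub>R e)) (at 0)" by (rule h)
  moreover have "(\<lambda>s. F ((y + t *\<^sub>R e) + s *\<^sub>R e)) = (\<lambda>s. F (y + (s + t) *\<^sub>R e))"
    by (simp add: scaleR_add_left add_ac)
  ultimately show ?thesis using DERIV_shift[of "\<lambda>t. F (y + t *\<^sub>R e)" "G (y + t *\<^sub>R e)" 0 t] by simp
qed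

lemma line_norm:
  fixes y :: "real^'n"
  assumes "1 + norm y \<le> \<bar>t\<bar>"
  shows "1 \<le> norm (y + t *\<^sub>R axis k 1)"
proof -
  have "\<bar>t\<bar> \<le> norm (y + t *\<^sub>R axis k 1) + norm y"
    using norm_triangle_ineq4[of "y + t *\<^sub>R axis k 1" y] by simp
  then show ?thesis using assms by simp
qed

lemma AE_hm:
  fixes m :: "real^'n"
  assumes m: "norm m = 1"
  shows "AE y in hyperplane_measure m s. m \<bullet> y = s"
proof -
  have mm: "m \<bullet> m = 1" using m by (simp add: dot_square_norm)
  have S: "{y. m \<bullet> y \<noteq> s} \<in> sets borel" by measurable
  have "emeasure (hyperplane_measure m s) {y. m \<bullet> y \<noteq> s} = emeasure lborel (Pm m s -` {y. m \<bullet> y \<noteq> s} \<inter> slab m s)"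
    unfolding hm_eq[OF m] using S by (simp add: emeasure_distr emeasure_density_indicator)
  also have "Pm m s -` {y. m \<bullet> y \<noteq> s} = {}"
    using mm by (auto simp: Pm_def inner_diff_right)
  finally have "emeasure (hyperplane_measure m s) {y. m \<bullet> y \<noteq> s} = 0" by simp
  then show ?thesis using S
    by (intro AE_I[where N="{y. m \<bullet> y \<noteq> s}"]) (auto simp: sets_hm)
qed

locale tfun =
  fixes F G D :: "real^'n \<Rightarrow> real" and i j :: 'n
  assumes hF: "\<And>x. ((\<lambda>t. F (x + t *\<^sub>R axis j 1)) has_real_derivative G x) (at 0)"
    and hG: "\<And>x. ((\<lambda>t. G (x + t *\<^sub>R axis i 1)) has_real_derivative D x) (at 0)"
    and cF: "continuous_on UNIV F" and cG: "continuous_on UNIV G" and cD: "continuous_on UNIV D"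
    and sF: "\<And>x. 1 \<le> norm x \<Longrightarrow> F x = 0"
    and sG: "\<And>x. 1 \<le> norm x \<Longrightarrow> G x = 0"
    and sD: "\<And>x. 1 \<le> norm x \<Longrightarrow> D x = 0"
begin

lemma meas[measurable]: "F \<in> borel_measurable borel" "G \<in> borel_measurable borel" "D \<in> borel_measurable borel"
  using cF cG cD by (auto intro: borel_measurable_continuous_onI)

lemma lineG:
  shows "\<And>t. ((\<lambda>t. G (y + t *\<^sub>R axis i 1)) has_real_derivative (\<lambda>t. D (y + t *\<^sub>R axis i 1)) t) (at t)"
    and "continuous_on UNIV (\<lambda>t. D (y + t *\<^sub>R axis i 1))"
    and "\<And>t. 1 + norm y \<le> \<bar>t\<bar> \<Longrightarrow> G (y + t *\<^sub>R axis i 1) = 0"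
    and "\<And>t. 1 + norm y \<le> \<bar>t\<bar> \<Longrightarrow> D (y + t *\<^sub>R axis i 1) = 0"
    and "0 < 1 + norm y"
proof -
  show "((\<lambda>t. G (y + t *\<^sub>R axis i 1)) has_real_derivative (\<lambda>t. D (y + t *\<^sub>R axis i 1)) t) (at t)" for t
    using line_deriv[OF hG] by simp
  show "continuous_on UNIV (\<lambda>t. D (y + t *\<^sub>R axis i 1))"
    by (rule continuous_on_compose2[OF cD]) (auto intro!: continuous_intros)
qed (auto intro: sG sD line_norm simp: add_pos_nonneg)

lemma lineF:
  shows "\<And>t. ((\<lambda>t. F (y + t *\<^sub>R axis j 1)) has_real_derivative (\<lambda>t. G (y + t *\<^sub>R axis j 1)) t) (at t)"
    and "continuous_on UNIV (\<lambda>t. G (y + t *\<^sub>R axis j 1))"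
    and "\<And>t. 1 + norm y \<le> \<bar>t\<bar> \<Longrightarrow> F (y + t *\<^sub>R axis j 1) = 0"
    and "\<And>t. 1 + norm y \<le> \<bar>t\<bar> \<Longrightarrow> G (y + t *\<^sub>R axis j 1) = 0"
    and "0 < 1 + norm y"
proof -
  show "((\<lambda>t. F (y + t *\<^sub>R axis j 1)) has_real_derivative (\<lambda>t. G (y + t *\<^sub>R axis j 1)) t) (at t)" for t
    using line_deriv[OF hF] by simp
  show "continuous_on UNIV (\<lambda>t. G (y + t *\<^sub>R axis j 1))"
    by (rule continuous_on_compose2[OF cG]) (auto intro!: continuous_intros)
qed (auto intro: sF sG line_norm simp: add_pos_nonneg)

lemma intG0: "integral\<^sup>L lborel G = 0"
proof -
  obtain B where B: "\<And>x. \<bar>G x\<bar> \<le> B" using bdd_cont_supp[OF cG sG] by blast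
  have "integral\<^sup>L lborel G = \<bar>(axis j 1::real^'n) \<bullet> axis j 1\<bar> * (\<integral>y. (\<integral>t. G (y + t *\<^sub>R axis j 1) \<partial>lborel) \<partial>hyperplane_measure (axis j 1) 0)"
    by (rule core_int[where B=B and R=1]) (use B sG in auto)
  also have "\<dots> = 0" using L1[OF lineF] by simp
  finally show ?thesis .
qed

lemma aff: "(LBINT x. (a \<bullet> x + b) * D x) = 0"
proof -
  obtain B where B: "\<And>x. \<bar>G x\<bar> \<le> B" using bdd_cont_supp[OF cG sG] by blast
  have c: "continuous_on UNIV (\<lambda>x. (a \<bullet> x + b) * D x)" by (intro continuous_intros cD)
  obtain B' where B': "\<And>x. \<bar>(a \<bullet> x + b) * D x\<bar> \<le> B'" using bdd_cont_supp[OF c] sD by force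
  have "(LBINT x. (a \<bullet> x + b) * D x) = \<bar>(axis i 1::real^'n) \<bullet> axis i 1\<bar> * (\<integral>y. (\<integral>t. (a \<bullet> (y + t *\<^sub>R axis i 1) + b) * D (y + t *\<^sub>R axis i 1) \<partial>lborel) \<partial>hyperplane_measure (axis i 1) 0)"
    by (rule core_int[where B=B' and R=1]) (use B' sD in auto)
  also have "\<dots> = (\<integral>y. - (a$i) * (\<integral>t. G (y + t *\<^sub>R axis i 1) \<partial>lborel) \<partial>hyperplane_measure (axis i 1) 0)"
  proof -
    have "(\<integral>t. (a \<bullet> (y + t *\<^sub>R axis i 1) + b) * D (y + t *\<^sub>R axis i 1) \<partial>lborel)
        = - (a$i) * (\<integral>t. G (y + t *\<^sub>R axis i 1) \<partial>lborel)" for y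
    proof -
      have "(\<integral>t. (a \<bullet> (y + t *\<^sub>R axis i 1) + b) * D (y + t *\<^sub>R axis i 1) \<partial>lborel)
          = (\<integral>t. ((a \<bullet> y + b) + a$i * t) * D (y + t *\<^sub>R axis i 1) \<partial>lborel)"
        by (simp add: inner_add_right inner_axis algebra_simps)
      also have "\<dots> = - (a$i) * (\<integral>t. G (y + t *\<^sub>R axis i 1) \<partial>lborel)"
        by (rule L2[OF lineG])
      finally show ?thesis .
    qed
    then show ?thesis by simp
  qed
  also have "\<dots> = - (a$i) * (\<integral>y. (\<integral>t. G (y + t *\<^sub>R axis i 1) \<partial>lborel) \<partial>hyperplane_measure (axis i 1) 0)"
    by simp
  also have "(\<integral>y. (\<integral>t. G (y + t *\<^sub>R axis i 1) \<partial>lborel) \<partial>hyperplane_measure (axis i 1) 0) = integral\<^sup>L lborel G"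
    using core_int[where m="axis i 1" and v="axis i 1" and f=G and B=B and R=1 and c=0] B sG by simp
  finally show ?thesis using intG0 by simp
qed

lemma wedge:
  fixes m :: "real^'n"
  assumes m: "norm m = 1"
  shows "(LBINT x. max (m \<bullet> x - s) 0 * D x) = m$i * m$j * (\<integral>y. F y \<partial>hyperplane_measure m s)"
proof -
  obtain BG where BG: "\<And>x. \<bar>G x\<bar> \<le> BG" using bdd_cont_supp[OF cG sG] by blast
  define H where "H = (\<lambda>x. indicator {x. m \<bullet> x > s} x * G x)"
  have [measurable]: "H \<in> borel_measurable borel" unfolding H_def by measurable
  have BH: "\<bar>H x\<bar> \<le> BG" for x using BG[of x] by (auto simp: H_def indicator_def)
  have sH: "1 < norm x \<Longrightarrow> H x = 0" for x using sG[of x] by (simp add: H_def)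
  have c: "continuous_on UNIV (\<lambda>x. max (m \<bullet> x - s) 0 * D x)" by (intro continuous_intros cD)
  obtain B' where B': "\<And>x. \<bar>max (m \<bullet> x - s) 0 * D x\<bar> \<le> B'" using bdd_cont_supp[OF c] sD by force
  have "(LBINT x. max (m \<bullet> x - s) 0 * D x) = \<bar>(axis i 1::real^'n) \<bullet> axis i 1\<bar> * (\<integral>y. (\<integral>t. max (m \<bullet> (y + t *\<^sub>R axis i 1) - s) 0 * D (y + t *\<^sub>R axis i 1) \<partial>lborel) \<partial>hyperplane_measure (axis i 1) 0)"
    by (rule core_int[where B=B' and R=1]) (use B' sD in auto)
  also have "\<dots> = (\<integral>y. - (m$i) * (\<integral>t. H (y + t *\<^sub>R axis i 1) \<partial>lborel) \<partial>hyperplane_measure (axis i 1) 0)"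
  proof -
    have "(\<integral>t. max (m \<bullet> (y + t *\<^sub>R axis i 1) - s) 0 * D (y + t *\<^sub>R axis i 1) \<partial>lborel)
        = - (m$i) * (\<integral>t. H (y + t *\<^sub>R axis i 1) \<partial>lborel)" for y
    proof -
      have "(\<integral>t. max (m \<bullet> (y + t *\<^sub>R axis i 1) - s) 0 * D (y + t *\<^sub>R axis i 1) \<partial>lborel)
          = (\<integral>t. max ((m \<bullet> y - s) + m$i * t) 0 * D (y + t *\<^sub>R axis i 1) \<partial>lborel)"
        by (simp add: inner_add_right inner_axis algebra_simps)
      also have "\<dots> = - (m$i) * (\<integral>t. indicator {t. (m \<bullet> y - s) + m$i * t > 0} t * G (y + t *\<^sub>R axis i 1) \<partial>lborel)"
        by (rule L3[OF lineG])
      also have "(\<integral>t. indicator {t. (m \<bullet> y - s) + m$i * t > 0} t * G (y + t *\<^sub>R axis i 1) \<partial>lborel)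
          = (\<integral>t. H (y + t *\<^sub>R axis i 1) \<partial>lborel)"
        by (rule Bochner_Integration.integral_cong) (auto simp: H_def indicator_def inner_add_right inner_axis algebra_simps)
      finally show ?thesis .
    qed
    then show ?thesis by simp
  qed
  also have "\<dots> = - (m$i) * (\<integral>y. (\<integral>t. H (y + t *\<^sub>R axis i 1) \<partial>lborel) \<partial>hyperplane_measure (axis i 1) 0)"
    by simp
  also have "(\<integral>y. (\<integral>t. H (y + t *\<^sub>R axis i 1) \<partial>lborel) \<partial>hyperplane_measure (axis i 1) 0) = integral\<^sup>L lborel H"
    using core_int[where m="axis i 1" and v="axis i 1" and f=H and B=BG and R=1 and c=0] BH sH by simp
  also have "integral\<^sup>L lborel H = - (m$j) * (\<integral>y. F y \<partial>hyperplane_measure m s)"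
  proof (cases "m$j = 0")
    case True
    have "integral\<^sup>L lborel H = \<bar>(axis j 1::real^'n) \<bullet> axis j 1\<bar> * (\<integral>y. (\<integral>t. H (y + t *\<^sub>R axis j 1) \<partial>lborel) \<partial>hyperplane_measure (axis j 1) 0)"
      by (rule core_int[where B=BG and R=1]) (use BH sH in auto)
    also have "\<dots> = (\<integral>y. indicator {x. m \<bullet> x > s} y * (\<integral>t. G (y + t *\<^sub>R axis j 1) \<partial>lborel) \<partial>hyperplane_measure (axis j 1) 0)"
      using True by (simp add: H_def inner_add_right inner_axis indicator_def)
    also have "\<dots> = 0" using L1[OF lineF] by simp
    finally show ?thesis using True by simp
  next
    case False
    have "integral\<^sup>L lborel H = \<bar>m \<bullet> axis j 1\<bar> * (\<integral>y. (\<integral>t. H (y + t *\<^sub>R axis j 1) \<partial>lborel) \<partial>hyperplane_measure m s)"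
      by (rule core_int[OF m _ _ BH, where R=1]) (use sH False in \<open>auto simp: inner_axis\<close>)
    also have "(\<integral>y. (\<integral>t. H (y + t *\<^sub>R axis j 1) \<partial>lborel) \<partial>hyperplane_measure m s)
        = (\<integral>y. - sgn (m$j) * F y \<partial>hyperplane_measure m s)"
    proof (rule integral_cong_AE)
      show "AE y in hyperplane_measure m s. (\<integral>t. H (y + t *\<^sub>R axis j 1) \<partial>lborel) = - sgn (m$j) * F y"
        using AE_hm[OF m, of s]
      proof eventually_elim
        fix y assume y: "m \<bullet> y = s"
        have "(\<integral>t. H (y + t *\<^sub>R axis j 1) \<partial>lborel) = (\<integral>t. indicator {t. m$j * t > 0} t * G (y + t *\<^sub>R axis j 1) \<partial>lborel)"
          by (rule Bochner_Integration.integral_cong) (auto simp: H_def indicator_def inner_add_right inner_axis y mult.commute)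
        also have "\<dots> = - sgn (m$j) * F (y + 0 *\<^sub>R axis j 1)"
          by (rule L4[OF lineF False])
        finally show "(\<integral>t. H (y + t *\<^sub>R axis j 1) \<partial>lborel) = - sgn (m$j) * F y" by simp
      qed
    qed (auto simp: sets_hm)
    also have "\<dots> = - sgn (m$j) * (\<integral>y. F y \<partial>hyperplane_measure m s)" by simp
    finally show ?thesis by (simp add: inner_axis abs_mult_sgn mult.assoc[symmetric])
  qed
  finally show ?thesis by simp
qed

end


definition dl :: "'n \<Rightarrow> 'n \<Rightarrow> real" where "dl a b = (if a = b then 1 else 0)"
definition rr :: "real^'n \<Rightarrow> real" where "rr y = 1 - y \<bullet> y"

definition kk :: "real \<Rightarrow> 'n \<Rightarrow> 'n \<Rightarrow> real^'n \<Rightarrow> real" where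
  "kk Q i j y = (dl i j - y$i * y$j) * rr y powr Q"

definition kA :: "real \<Rightarrow> 'n \<Rightarrow> 'n \<Rightarrow> 'n \<Rightarrow> real^'n \<Rightarrow> real" where
  "kA Q i j a y = -(dl a i * y$j + y$i * dl a j) + (dl i j - y$i*y$j) * (-2*Q*y$a) / rr y"

definition ka :: "real \<Rightarrow> 'n \<Rightarrow> 'n \<Rightarrow> 'n \<Rightarrow> real^'n \<Rightarrow> real" where
  "ka Q i j a y = kA Q i j a y * rr y powr Q"

definition kAb :: "real \<Rightarrow> 'n \<Rightarrow> 'n \<Rightarrow> 'n \<Rightarrow> 'n \<Rightarrow> real^'n \<Rightarrow> real" where
  "kAb Q i j b a y = -(dl a i * dl b j + dl b i * dl a j)
     + (-(dl b i * y$j + y$i * dl b j)*(-2*Q*y$a) + (dl i j - y$i*y$j)*(-2*Q*dl b a)) / rr y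
     + (dl i j - y$i*y$j)*(-2*Q*y$a)*(2*y$b) / (rr y)\<^sup>2"

definition kb :: "real \<Rightarrow> 'n \<Rightarrow> 'n \<Rightarrow> 'n \<Rightarrow> 'n \<Rightarrow> real^'n \<Rightarrow> real" where
  "kb Q i j b a y = (kAb Q i j b a y + kA Q i j a y * (-2*Q*y$b) / rr y) * rr y powr Q"

lemma line_comp: "(y + t *\<^sub>R axis a 1)$i = y$i + t * dl a i"
  by (simp add: dl_def axis_def)

lemma line_rr: "rr (y + t *\<^sub>R axis a 1) = 1 - (y \<bullet> y + 2 * t * y$a + t\<^sup>2)"
  by (simp add: rr_def inner_add_left inner_add_right inner_axis inner_commute power2_eq_square algebra_simps)

lemma yy: "y \<bullet> y = 1 - rr y" by (simp add: rr_def)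

lemma k_line:
  fixes y :: "real^'n" and i j a :: 'n
  assumes "rr y > 0"
  shows "((\<lambda>t. kk Q i j (y + t *\<^sub>R axis a 1)) has_real_derivative ka Q i j a y) (at 0)"
proof -
  have e: "(\<lambda>t. kk Q i j (y + t *\<^sub>R axis a 1)) = (\<lambda>t. (dl i j - (y$i + t * dl a i) * (y$j + t * dl a j)) * (1 - (y \<bullet> y + 2 * t * y$a + t\<^sup>2)) powr Q)"
    by (rule ext) (simp only: kk_def line_comp line_rr)
  show ?thesis unfolding e
    apply (rule derivative_eq_intros refl | (use assms in \<open>simp add: rr_def\<close>; fail))+
    using assms apply (simp add: ka_def kA_def rr_def powr_diff field_simps)
    done
qed

lemma ka_line:
  fixes y :: "real^'n" and i j a b :: 'n
  assumes "rr y > 0"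
  shows "((\<lambda>t. ka Q i j a (y + t *\<^sub>R axis b 1)) has_real_derivative kb Q i j b a y) (at 0)"
proof -
  have e: "(\<lambda>t. ka Q i j a (y + t *\<^sub>R axis b 1)) = (\<lambda>t. 
      (-(dl a i * (y$j + t * dl b j) + (y$i + t * dl b i) * dl a j) + (dl i j - (y$i + t * dl b i)*(y$j + t * dl b j)) * (-2*Q*(y$a + t * dl b a)) / (1 - (y \<bullet> y + 2 * t * y$b + t\<^sup>2)))
       * (1 - (y \<bullet> y + 2 * t * y$b + t\<^sup>2)) powr Q)"
    by (rule ext) (simp only: ka_def kA_def line_comp line_rr)
  show ?thesis unfolding e
    apply (rule derivative_eq_intros refl | (use assms in \<open>simp add: rr_def\<close>; fail))+
    using assms apply (simp add: yy kb_def kA_def kAb_def powr_diff field_simps power2_eq_square)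
    done
qed

lemma rr_pos: "y \<in> ball 0 1 \<Longrightarrow> rr y > 0"
  by (simp add: rr_def dot_square_norm abs_square_less_1)

lemma cont_rr[continuous_intros]: "continuous_on S rr"
  unfolding rr_def by (intro continuous_intros)

lemma cont_kk: "continuous_on (ball 0 1) (kk Q i j)"
  unfolding kk_def by (intro continuous_intros) (auto dest: rr_pos)

lemma cont_ka: "continuous_on (ball 0 1) (ka Q i j a)"
  unfolding ka_def kA_def by (intro continuous_intros) (auto dest: rr_pos)

lemma cont_kb: "continuous_on (ball 0 1) (kb Q i j b a)"
  unfolding kb_def kA_def kAb_def by (intro continuous_intros) (auto dest: rr_pos)

lemma mm_coeff_kk:
  fixes y :: "real^'n"
  assumes "y \<in> ball 0 1"
  shows "mm_coeff i j y = kk (- real CARD('n) / 2) i j y"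
proof -
  have r: "rr y > 0" using rr_pos[OF assms] .
  have L: "L y = sqrt (rr y)" by (simp add: L_def rr_def dot_square_norm)
  have "(L y) ^ CARD('n) = rr y powr (real CARD('n) / 2)"
    using r by (simp add: L powr_half_sqrt[symmetric] powr_power)
  then show ?thesis
    by (simp add: mm_coeff_def kk_def dl_def powr_minus_divide divide_simps)
qed

lemma deriv_zero_open:
  fixes f :: "real^'n \<Rightarrow> real"
  assumes U: "open U" "x \<in> U" and z: "\<And>y. y \<in> U \<Longrightarrow> f y = 0"
  shows "((\<lambda>t. f (x + t *\<^sub>R e)) has_real_derivative 0) (at 0)"
proof (rule has_field_derivative_transform_within_open[where f="\<lambda>_. 0" and S="{t. x + t *\<^sub>R e \<in> U}"])
  show "open {t::real. x + t *\<^sub>R e \<in> U}"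
    using U(1) by (intro open_Collect_less_Int continuous_open_vimage[of _ "\<lambda>t. x + t *\<^sub>R e", unfolded vimage_def]) (auto intro!: continuous_intros)
qed (use U z in auto)

lemma cont_glue:
  fixes f :: "real^'n \<Rightarrow> real"
  assumes c: "continuous_on (ball 0 1) f" and K: "closed K" "K \<subseteq> ball 0 1" and z: "\<And>y. y \<notin> K \<Longrightarrow> f y = 0"
  shows "continuous_on UNIV f"
proof -
  have "continuous_on (- K) f"
    by (rule continuous_on_eq[where f="\<lambda>_. 0"]) (use z in auto)
  then have "continuous_on (ball 0 1 \<union> - K) f"
    using K c by (intro continuous_on_open_Un) auto
  moreover have "ball 0 1 \<union> - K = UNIV" using K by auto
  ultimately show ?thesis by simp
qed

locale testf =
  fixes \<phi> :: "real^'n \<Rightarrow> real"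
  assumes tf: "test_fun \<phi>"
begin

definition "K = closure {x. \<phi> x \<noteq> 0}"

lemma K: "compact K" "K \<subseteq> ball 0 1" "closed K"
  using tf by (auto simp: test_fun_def K_def)

lemma phi_deriv: "((\<lambda>t. iter_partial is \<phi> (x + t *\<^sub>R axis i 1)) has_real_derivative iter_partial (i#is) \<phi> x) (at 0)"
proof -
  have "(\<lambda>t. iter_partial is \<phi> (x + t *\<^sub>R axis i 1)) differentiable (at 0)"
    using tf by (auto simp: test_fun_def smooth_fun_def)
  then show ?thesis
    by (simp add: DERIV_deriv_iff_real_differentiable[symmetric] partial_def)
qed

lemma phi_cont: "continuous_on UNIV (iter_partial is \<phi>)"
  using tf by (auto simp: test_fun_def smooth_fun_def)

lemma phi_zero: "x \<notin> K \<Longrightarrow> iter_partial is \<phi> x = 0"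
proof (induction "is" arbitrary: x)
  case Nil
  then show ?case using closure_subset[of "{x. \<phi> x \<noteq> 0}"] by (auto simp: K_def)
next
  case (Cons i "is")
  have "((\<lambda>t. iter_partial is \<phi> (x + t *\<^sub>R axis i 1)) has_real_derivative 0) (at 0)"
    by (rule deriv_zero_open[where U="- K"]) (use K Cons in auto)
  then show ?case by (simp add: partial_def DERIV_imp_deriv)
qed

definition psi :: "'n \<Rightarrow> 'n \<Rightarrow> real^'n \<Rightarrow> real" where
  "psi i j = (\<lambda>y. mm_coeff i j y * \<phi> y)"

definition Gf :: "'n \<Rightarrow> 'n \<Rightarrow> real^'n \<Rightarrow> real" where
  "Gf i j y = ka (- real CARD('n) / 2) i j j y * \<phi> y + kk (- real CARD('n) / 2) i j y * iter_partial [j] \<phi> y"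

definition Df :: "'n \<Rightarrow> 'n \<Rightarrow> real^'n \<Rightarrow> real" where
  "Df i j y = kb (- real CARD('n) / 2) i j i j y * \<phi> y + ka (- real CARD('n) / 2) i j j y * iter_partial [i] \<phi> y
     + ka (- real CARD('n) / 2) i j i y * iter_partial [j] \<phi> y + kk (- real CARD('n) / 2) i j y * iter_partial [i, j] \<phi> y"

lemma phi0: "x \<notin> K \<Longrightarrow> \<phi> x = 0"
  using phi_zero[of x "[]"] by simp

lemma phiz: "x \<notin> K \<Longrightarrow> partial a \<phi> x = 0" "x \<notin> K \<Longrightarrow> partial a (partial b \<phi>) x = 0"
  using phi_zero[of x "[a]"] phi_zero[of x "[a,b]"] by simp_all

lemma psi_eq: "psi i j = (\<lambda>y. kk (- real CARD('n) / 2) i j y * \<phi> y)"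
proof
  fix y :: "real^'n"
  show "psi i j y = kk (- real CARD('n) / 2) i j y * \<phi> y"
  proof (cases "y \<in> ball 0 1")
    case True then show ?thesis by (simp add: psi_def mm_coeff_kk)
  next
    case False then have "y \<notin> K" using K by auto
    then show ?thesis by (simp add: psi_def phi0)
  qed
qed

lemma outK: "x \<notin> ball 0 1 \<Longrightarrow> x \<notin> K" using K by auto

lemma d1: "((\<lambda>t. psi i j (x + t *\<^sub>R axis j 1)) has_real_derivative Gf i j x) (at 0)"
proof (cases "x \<in> ball 0 1")
  case True
  have "((\<lambda>t. kk (- real CARD('n) / 2) i j (x + t *\<^sub>R axis j 1) * iter_partial [] \<phi> (x + t *\<^sub>R axis j 1)) has_real_derivative
      ka (- real CARD('n) / 2) i j j x * iter_partial [] \<phi> (x + 0 *\<^sub>R axis j 1) + iter_partial [j] \<phi> x * kk (- real CARD('n) / 2) i j (x + 0 *\<^sub>R axis j 1)) (at 0)"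
    by (rule DERIV_mult[OF k_line[OF rr_pos[OF True]] phi_deriv])
  then show ?thesis by (simp add: psi_eq Gf_def mult.commute)
next
  case False
  then have xK: "x \<notin> K" by (rule outK)
  have "((\<lambda>t. psi i j (x + t *\<^sub>R axis j 1)) has_real_derivative 0) (at 0)"
    by (rule deriv_zero_open[where U="- K"]) (use K xK in \<open>auto simp: psi_def phi0\<close>)
  moreover have "Gf i j x = 0" using xK by (simp add: Gf_def phiz phi0)
  ultimately show ?thesis by simp
qed

lemma d2: "((\<lambda>t. Gf i j (x + t *\<^sub>R axis i 1)) has_real_derivative Df i j x) (at 0)"
proof (cases "x \<in> ball 0 1")
  case True
  note r = rr_pos[OF True]
  have "((\<lambda>t. ka (- real CARD('n) / 2) i j j (x + t *\<^sub>R axis i 1) * iter_partial [] \<phi> (x + t *\<^sub>R axis i 1)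
       + kk (- real CARD('n) / 2) i j (x + t *\<^sub>R axis i 1) * iter_partial [j] \<phi> (x + t *\<^sub>R axis i 1)) has_real_derivative
      (kb (- real CARD('n) / 2) i j i j x * iter_partial [] \<phi> (x + 0 *\<^sub>R axis i 1) + iter_partial [i] \<phi> x * ka (- real CARD('n) / 2) i j j (x + 0 *\<^sub>R axis i 1))
    + (ka (- real CARD('n) / 2) i j i x * iter_partial [j] \<phi> (x + 0 *\<^sub>R axis i 1) + iter_partial [i, j] \<phi> x * kk (- real CARD('n) / 2) i j (x + 0 *\<^sub>R axis i 1))) (at 0)"
    by (rule DERIV_add[OF DERIV_mult[OF ka_line[OF r] phi_deriv] DERIV_mult[OF k_line[OF r] phi_deriv]])
  then show ?thesis by (simp add: Gf_def Df_def mult.commute add.assoc)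
next
  case False
  then have xK: "x \<notin> K" by (rule outK)
  have "((\<lambda>t. Gf i j (x + t *\<^sub>R axis i 1)) has_real_derivative 0) (at 0)"
    by (rule deriv_zero_open[where U="- K"]) (use K xK in \<open>auto simp: Gf_def phiz phi0\<close>)
  moreover have "Df i j x = 0" using xK by (simp add: Df_def phiz phi0)
  ultimately show ?thesis by simp
qed

lemma phi_cont': "continuous_on S (iter_partial is \<phi>)"
  using phi_cont continuous_on_subset by blast

lemma cont_psi: "continuous_on UNIV (psi i j)"
proof (rule cont_glue[OF _ K(3) K(2)])
  have "continuous_on (ball 0 1) (\<lambda>y. kk (- real CARD('n) / 2) i j y * iter_partial [] \<phi> y)"
    by (intro continuous_intros cont_kk phi_cont')
  then show "continuous_on (ball 0 1) (psi i j)" by (simp add: psi_eq)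
qed (simp add: psi_def phi0)

lemma cont_Gf: "continuous_on UNIV (Gf i j)"
proof (rule cont_glue[OF _ K(3) K(2)])
  show "continuous_on (ball 0 1) (Gf i j)"
    unfolding Gf_def using phi_cont'[of _ "[]"] by (intro continuous_intros cont_kk cont_ka phi_cont') simp
qed (simp add: Gf_def phiz phi0)

lemma cont_Df: "continuous_on UNIV (Df i j)"
proof (rule cont_glue[OF _ K(3) K(2)])
  show "continuous_on (ball 0 1) (Df i j)"
    unfolding Df_def using phi_cont'[of _ "[]"] by (intro continuous_intros cont_kk cont_ka cont_kb phi_cont') simp
qed (simp add: Df_def phiz phi0)

lemma partial_psi: "partial j (psi i j) = Gf i j"
  by (rule ext) (simp add: partial_def DERIV_imp_deriv[OF d1])

lemma iter_partial_psi: "iter_partial [i, j] (\<lambda>y. mm_coeff i j y * \<phi> y) = Df i j"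
proof -
  have "iter_partial [i, j] (\<lambda>y. mm_coeff i j y * \<phi> y) = partial i (partial j (psi i j))"
    by (simp add: psi_def)
  also have "\<dots> = partial i (Gf i j)" by (simp add: partial_psi)
  also have "\<dots> = Df i j" by (rule ext) (simp add: partial_def DERIV_imp_deriv[OF d2])
  finally show ?thesis .
qed

lemma supp: "1 \<le> norm x \<Longrightarrow> psi i j x = 0 \<and> Gf i j x = 0 \<and> Df i j x = 0"
proof -
  assume "1 \<le> norm x"
  then have "x \<notin> K" using K by auto
  then show ?thesis by (simp add: psi_def Gf_def Df_def phiz phi0)
qed

end


lemma (in testf) tfun_psi: "tfun (psi i j) (Gf i j) (Df i j) i j"
  by unfold_locales (auto intro: d1 d2 cont_psi cont_Gf cont_Df dest: supp)

lemma hm_finite: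
  fixes m :: "real^'n"
  assumes m: "norm m = 1" and A: "bounded A" "A \<in> sets borel"
  shows "emeasure (hyperplane_measure m c) A < \<infinity>"
proof -
  have mm: "m \<bullet> m = 1" using m by (simp add: dot_square_norm)
  obtain R where R: "\<And>x. x \<in> A \<Longrightarrow> norm x \<le> R" using A(1) bounded_iff by blast
  have pa: "Pm m c -` A \<in> sets borel" using measurable_sets[OF Pm_measurable A(2)] by simp
  have "emeasure (hyperplane_measure m c) A = emeasure lborel (Pm m c -` A \<inter> slab m c)"
    unfolding hm_eq[OF m] using A by (simp add: emeasure_distr emeasure_density_indicator[OF pa slab_borel])
  also have "\<dots> < \<infinity>"
  proof (rule emeasure_bounded_finite)
    show "bounded (Pm m c -` A \<inter> slab m c)"
      unfolding bounded_iff
    proof (intro exI ballI)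
      fix x assume x: "x \<in> Pm m c -` A \<inter> slab m c"
      have "x = Pm m c x + (m \<bullet> x - c) *\<^sub>R m" by (simp add: Pm_def)
      then have "norm x \<le> norm (Pm m c x) + norm ((m \<bullet> x - c) *\<^sub>R m)" by (metis norm_triangle_ineq)
      also have "\<dots> \<le> R + 1" using x R m by (auto simp: slab_def intro!: add_mono)
      finally show "norm x \<le> R + 1" .
    qed
  qed
  finally show ?thesis .
qed

lemma hm_integrable:
  fixes m :: "real^'n" and f :: "real^'n \<Rightarrow> real"
  assumes m: "norm m = 1" and [measurable]: "f \<in> borel_measurable borel"
    and B: "\<And>x. \<bar>f x\<bar> \<le> B" and s: "\<And>x. 1 \<le> norm x \<Longrightarrow> f x = 0"
  shows "integrable (hyperplane_measure m c) f"
proof (rule integrableI_bounded_set[where A="ball 0 1" and B=B])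
  show "emeasure (hyperplane_measure m c) (ball 0 1) < \<infinity>" by (rule hm_finite[OF m]) auto
  show "AE x in hyperplane_measure m c. x \<notin> ball 0 1 \<longrightarrow> f x = 0" using s by auto
qed (use B in \<open>auto simp: sets_hm\<close>)

lemma geom:
  fixes u :: "real^'n"
  assumes u: "u \<noteq> 0" and ne: "hsec u c \<noteq> {}"
  shows "norm (hsec_n u c) = 1" "hsec_n u c \<bullet> hsec_p u c = norm (hsec_p u c)" "norm (hsec_p u c) < 1"
    "\<And>x. u \<bullet> x = c \<longleftrightarrow> hsec_n u c \<bullet> x = hsec_n u c \<bullet> hsec_p u c"
proof -
  define nu where "nu = norm u"
  have nu: "nu > 0" using u by (simp add: nu_def)
  have np: "norm (hsec_p u c) = \<bar>c\<bar> / nu"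
    using nu by (simp add: hsec_p_def nu_def power2_eq_square)
  obtain x where "x \<in> hsec u c" using ne by blast
  then have x: "norm x < 1" "u \<bullet> x = c" by (auto simp: hsec_def)
  have "\<bar>c\<bar> \<le> nu * norm x" using Cauchy_Schwarz_ineq2[of u x] x by (simp add: nu_def)
  also have "\<dots> < nu" using x nu by simp
  finally have cn: "\<bar>c\<bar> < nu" .
  show "norm (hsec_p u c) < 1" using cn nu np by simp
  have "norm (hsec_n u c) = 1 \<and> hsec_n u c \<bullet> hsec_p u c = norm (hsec_p u c) \<and>
     (\<forall>x. u \<bullet> x = c \<longleftrightarrow> hsec_n u c \<bullet> x = hsec_n u c \<bullet> hsec_p u c)"
  proof (cases "c = 0")
    case True
    then show ?thesis using nu by (auto simp: hsec_n_def hsec_p_def nu_def)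
  next
    case False
    have pnz: "hsec_p u c \<noteq> 0" using False u by (simp add: hsec_p_def)
    have n1: "norm (hsec_n u c) = 1" using False pnz by (simp add: hsec_n_def)
    have sp: "hsec_n u c \<bullet> hsec_p u c = norm (hsec_p u c)"
      using False pnz by (simp add: hsec_n_def dot_square_norm power2_eq_square)
    have mx: "hsec_n u c \<bullet> y = (c / \<bar>c\<bar>) * (u \<bullet> y) / nu" for y
      using False nu np by (simp add: hsec_n_def hsec_p_def nu_def power2_eq_square field_simps)
    have "u \<bullet> y = c \<longleftrightarrow> hsec_n u c \<bullet> y = hsec_n u c \<bullet> hsec_p u c" for y
    proof -
      have "hsec_n u c \<bullet> y = hsec_n u c \<bullet> hsec_p u c \<longleftrightarrow> (c / \<bar>c\<bar>) * (u \<bullet> y) / nu = \<bar>c\<bar> / nu"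
        using sp np mx by simp
      also have "\<dots> \<longleftrightarrow> u \<bullet> y = c"
        using False nu by (cases "c > 0") (auto simp: field_simps)
      finally show ?thesis by simp
    qed
    then show ?thesis using n1 sp by blast
  qed
  then show "norm (hsec_n u c) = 1" "hsec_n u c \<bullet> hsec_p u c = norm (hsec_p u c)"
    "\<And>x. u \<bullet> x = c \<longleftrightarrow> hsec_n u c \<bullet> x = hsec_n u c \<bullet> hsec_p u c" by auto
qed

lemma integrable_cont_supp:
  fixes f :: "real^'n \<Rightarrow> real"
  assumes c: "continuous_on UNIV f" and s: "\<And>x. 1 \<le> norm x \<Longrightarrow> f x = 0"
  shows "integrable lborel f"
proof -
  obtain B where B: "\<And>x. \<bar>f x\<bar> \<le> B" using bdd_cont_supp[OF c s] by blast
  have [measurable]: "f \<in> borel_measurable borel" using c by (rule borel_measurable_continuous_onI)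
  show ?thesis by (rule integrable_bdd_supp[where B=B and R=1]) (use B s in auto)
qed

lemma pairing_formula:
  fixes h :: "real^'n \<Rightarrow> real" and m a :: "real^'n"
  assumes m: "norm m = 1" and hx: "\<And>x. x \<in> ball 0 1 \<Longrightarrow> h x = a \<bullet> x + b + \<beta> * max (m \<bullet> x - s) 0"
    and tf: "test_fun \<phi>"
  shows "mm_pairing h \<phi> = \<beta> * (\<integral>y. (\<Sum>i\<in>UNIV. \<Sum>j\<in>UNIV. m$i * m$j * (mm_coeff i j y * \<phi> y)) \<partial>hyperplane_measure m s)"
proof -
  interpret testf \<phi> by (rule testf.intro[OF tf])
  have psi_int: "integrable (hyperplane_measure m s) (psi i j)" for i j
  proof -
    obtain B where B: "\<And>x. \<bar>psi i j x\<bar> \<le> B" using bdd_cont_supp[OF cont_psi] supp by force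
    show ?thesis
      by (rule hm_integrable[OF m _ B]) (use supp cont_psi in \<open>auto intro: borel_measurable_continuous_onI\<close>)
  qed
  have trm: "(LINT x : ball 0 1 | lborel. h x * iter_partial [i, j] (\<lambda>y. mm_coeff i j y * \<phi> y) x)
      = \<beta> * (m$i * m$j * (\<integral>y. psi i j y \<partial>hyperplane_measure m s))" for i j
  proof -
    interpret tfun "psi i j" "Gf i j" "Df i j" i j by (rule tfun_psi)
    have "(LINT x : ball 0 1 | lborel. h x * iter_partial [i, j] (\<lambda>y. mm_coeff i j y * \<phi> y) x)
        = (LBINT x. (a \<bullet> x + b) * Df i j x + \<beta> * (max (m \<bullet> x - s) 0 * Df i j x))"
      unfolding set_lebesgue_integral_def iter_partial_psi
    proof (rule Bochner_Integration.integral_cong[OF refl])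
      fix x :: "real^'n"
      show "indicator (ball 0 1) x *\<^sub>R (h x * Df i j x) = (a \<bullet> x + b) * Df i j x + \<beta> * (max (m \<bullet> x - s) 0 * Df i j x)"
      proof (cases "x \<in> ball 0 1")
        case True then show ?thesis using hx[OF True] by (simp add: algebra_simps)
      next
        case False then have "Df i j x = 0" using sD by simp
        then show ?thesis by simp
      qed
    qed
    also have "\<dots> = (LBINT x. (a \<bullet> x + b) * Df i j x) + \<beta> * (LBINT x. max (m \<bullet> x - s) 0 * Df i j x)"
    proof -
      have i1: "integrable lborel (\<lambda>x. (a \<bullet> x + b) * Df i j x)"
        by (rule integrable_cont_supp) (auto intro!: continuous_intros cD simp: sD)
      have i2: "integrable lborel (\<lambda>x. \<beta> * (max (m \<bullet> x - s) 0 * Df i j x))"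
        by (rule integrable_cont_supp) (auto intro!: continuous_intros cD simp: sD)
      show ?thesis by (simp add: Bochner_Integration.integral_add[OF i1 i2])
    qed
    also have "\<dots> = \<beta> * (m$i * m$j * (\<integral>y. psi i j y \<partial>hyperplane_measure m s))"
      by (simp add: aff wedge[OF m])
    finally show ?thesis .
  qed
  have "mm_pairing h \<phi> = (\<Sum>i\<in>UNIV. \<Sum>j\<in>UNIV. \<beta> * (m$i * m$j * (\<integral>y. psi i j y \<partial>hyperplane_measure m s)))"
    unfolding mm_pairing_def trm ..
  also have "\<dots> = \<beta> * (\<integral>y. (\<Sum>i\<in>UNIV. \<Sum>j\<in>UNIV. m$i * m$j * psi i j y) \<partial>hyperplane_measure m s)"
    using psi_int
    by (simp add: Bochner_Integration.integral_sum sum_distrib_left)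
  finally show ?thesis by (simp add: psi_def)
qed

lemma sum_mm:
  fixes m y :: "real^'n"
  assumes m: "norm m = 1"
  shows "(\<Sum>i\<in>UNIV. \<Sum>j\<in>UNIV. m$i * m$j * (mm_coeff i j y * \<phi> y)) = \<phi> y * (1 - (m \<bullet> y)\<^sup>2) / L y ^ CARD('n)"
proof -
  have mm: "m \<bullet> m = 1" using m by (simp add: dot_square_norm)
  have "(\<Sum>i\<in>UNIV. \<Sum>j\<in>UNIV. m$i * m$j * (mm_coeff i j y * \<phi> y))
      = (\<phi> y / L y ^ CARD('n)) * ((\<Sum>i\<in>UNIV. \<Sum>j\<in>UNIV. m$i * m$j * (if i = j then 1 else 0))
          - (\<Sum>i\<in>UNIV. \<Sum>j\<in>UNIV. (m$i * y$i) * (m$j * y$j)))"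
    by (simp add: mm_coeff_def sum_distrib_left sum_subtractf[symmetric] algebra_simps diff_divide_distrib)
  also have "(\<Sum>i\<in>UNIV. \<Sum>j\<in>UNIV. m$i * m$j * (if i = j then 1 else 0)) = m \<bullet> m"
  proof -
    have "(\<Sum>j\<in>UNIV. m$i * m$j * (if i = j then 1 else 0)) = m$i * m$i" for i
      by (simp add: if_distrib[where f="\<lambda>z. _ * z"] cong: if_cong)
    then show ?thesis by (simp add: inner_vec_def)
  qed
  also have "(\<Sum>i\<in>UNIV. \<Sum>j\<in>UNIV. (m$i * y$i) * (m$j * y$j)) = (m \<bullet> y)\<^sup>2"
    by (simp add: inner_vec_def power2_eq_square sum_product)
  finally show ?thesis using mm by simp
qed

theorem lemma2p19:
  fixes u :: "real^'n" and c :: real and h hm hp :: "real^'n \<Rightarrow> real" and \<alpha> :: real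
  assumes "u \<noteq> 0"
    and "hsec u c \<noteq> {}"
    and "is_wedge u c h hm hp \<alpha>"
    and "\<alpha> > 0"
  shows "is_MM h (scale_measure (ennreal \<alpha>) (omega u c))"
proof -
  note G = geom[OF assms(1,2)]
  define p where "p = hsec_p u c"
  define m where "m = hsec_n u c"
  define s where "s = m \<bullet> p"
  define q where "q = L p"
  define d where "d = CARD('n)"
  have m1: "norm m = 1" using G by (simp add: m_def)
  have sp: "s = norm p" using G by (simp add: s_def m_def p_def)
  have p1: "norm p < 1" using G by (simp add: p_def)
  have iff: "u \<bullet> x = c \<longleftrightarrow> m \<bullet> x = s" for x using G by (simp add: m_def s_def p_def)
  have s0: "0 \<le> s" "s < 1" using sp p1 by auto
  have q0: "q > 0" using p1 by (simp add: q_def L_def abs_square_less_1)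
  have qs: "q\<^sup>2 = 1 - s\<^sup>2" using p1 sp by (simp add: q_def L_def abs_square_less_1 less_imp_le)
  have hsec_eq: "hsec u c = ball 0 1 \<inter> {x. m \<bullet> x = s}" by (auto simp: hsec_def iff)
  have canon: "hsec_canon u c x = (m \<bullet> x - s) / q" for x
    by (simp add: hsec_canon_def q_def p_def m_def s_def inner_diff_right inner_commute)
  have plus: "hsec_plus u c = ball 0 1 \<inter> {x. s < m \<bullet> x}"
    by (simp add: hsec_plus_def m_def p_def s_def)
  obtain a b where ab: "\<And>x. hm x = a \<bullet> x + b"
    using assms(3) by (auto simp: is_wedge_def affine_fun_def)
  have hx: "h x = a \<bullet> x + b + (\<alpha> / q) * max (m \<bullet> x - s) 0" if x: "x \<in> ball 0 1" for x
  proof -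
    have "h x = hm x + (hp x - hm x) * indicator (hsec_plus u c) x"
      using assms(3) x by (auto simp: is_wedge_def)
    also have "hp x - hm x = \<alpha> * ((m \<bullet> x - s) / q)"
      using assms(3) x by (auto simp: is_wedge_def canon)
    finally show ?thesis using x by (auto simp: ab plus indicator_def max_def)
  qed
  define \<sigma> where "\<sigma> = hyperplane_measure m s"
  have [measurable]: "hsec u c \<in> sets borel" unfolding hsec_eq by measurable
  have Lm[measurable]: "L \<in> borel_measurable borel" unfolding L_def by measurable
  have Lpos: "x \<in> ball 0 1 \<Longrightarrow> L x > 0" for x by (simp add: L_def abs_square_less_1)
  define g where "g x = \<alpha> * (indicator (hsec u c) x * (q / L x ^ d))" for x
  have gm[measurable]: "g \<in> borel_measurable borel" unfolding g_def by measurable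
  have g0: "g x \<ge> 0" for x
    using assms(4) q0 Lpos[of x] by (auto simp: g_def hsec_eq indicator_def)
  have om: "omega u c = density \<sigma> (\<lambda>x. indicator (hsec u c) x * ennreal (q / L x ^ d))"
  proof -
    have "indicator (hsec u c) x * ennreal (induced_vol_density m x) = indicator (hsec u c) x * ennreal (q / L x ^ d)" for x
    proof (cases "x \<in> hsec u c")
      case True
      then have "m \<bullet> x = s" "norm x < 1" by (auto simp: hsec_eq)
      from density_formula[OF m1 this] have "induced_vol_density m x = sqrt (1 - s\<^sup>2) / L x ^ d"
        by (simp add: d_def)
      moreover have "sqrt (1 - s\<^sup>2) = q" using qs q0 by (metis less_imp_le real_sqrt_unique)
      ultimately show ?thesis by simp
    qed simp
    then show ?thesis unfolding omega_def \<sigma>_def m_def[symmetric] p_def[symmetric] s_def[symmetric] by simp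
  qed
  have mu: "scale_measure (ennreal \<alpha>) (omega u c) = density \<sigma> (\<lambda>x. ennreal (g x))"
  proof (rule measure_eqI)
    show "sets (scale_measure (ennreal \<alpha>) (omega u c)) = sets (density \<sigma> (\<lambda>x. ennreal (g x)))"
      by (simp add: om)
  next
    fix A assume "A \<in> sets (scale_measure (ennreal \<alpha>) (omega u c))"
    then have A: "A \<in> sets \<sigma>" by (simp add: om)
    then have A'[measurable]: "A \<in> sets borel" by (simp add: \<sigma>_def sets_hm)
    have "emeasure (scale_measure (ennreal \<alpha>) (omega u c)) A
        = ennreal \<alpha> * (\<integral>\<^sup>+x. indicator (hsec u c) x * ennreal (q / L x ^ d) * indicator A x \<partial>\<sigma>)"
      using A by (simp add: om emeasure_density \<sigma>_def)
    also have "\<dots> = (\<integral>\<^sup>+x. ennreal \<alpha> * (indicator (hsec u c) x * ennreal (q / L x ^ d) * indicator A x) \<partial>\<sigma>)"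
      by (rule nn_integral_cmult[symmetric]) (unfold \<sigma>_def, measurable)
    also have "\<dots> = (\<integral>\<^sup>+x. ennreal (g x) * indicator A x \<partial>\<sigma>)"
    proof (rule nn_integral_cong)
      fix x
      show "ennreal \<alpha> * (indicator (hsec u c) x * ennreal (q / L x ^ d) * indicator A x) = ennreal (g x) * indicator A x"
        using assms(4) q0 Lpos[of x] by (auto simp: g_def indicator_def hsec_eq ennreal_mult[symmetric])
    qed
    also have "\<dots> = emeasure (density \<sigma> (\<lambda>x. ennreal (g x))) A"
      using A by (simp add: emeasure_density \<sigma>_def)
    finally show "emeasure (scale_measure (ennreal \<alpha>) (omega u c)) A = emeasure (density \<sigma> (\<lambda>x. ennreal (g x))) A" .
  qed
  show ?thesis
    unfolding is_MM_def mu
  proof (intro conjI allI impI)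
    show "sets (density \<sigma> (\<lambda>x. ennreal (g x))) = sets borel" by (simp add: \<sigma>_def sets_hm)
  next
    have "emeasure (density \<sigma> (\<lambda>x. ennreal (g x))) (- ball 0 1) = (\<integral>\<^sup>+x. ennreal (g x) * indicator (- ball 0 1) x \<partial>\<sigma>)"
      by (simp add: emeasure_density \<sigma>_def)
    also have "\<dots> = (\<integral>\<^sup>+x. 0 \<partial>\<sigma>)"
      by (rule nn_integral_cong) (auto simp: g_def hsec_eq indicator_def)
    finally show "emeasure (density \<sigma> (\<lambda>x. ennreal (g x))) (- ball 0 1) = 0" by simp
  next
    fix K :: "(real^'n) set" assume K: "compact K \<and> K \<subseteq> ball 0 1"
    have Kb[measurable]: "K \<in> sets borel" using K by (simp add: compact_imp_closed)
    have "continuous_on K (\<lambda>x. \<alpha> * (q / L x ^ d))"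
      unfolding L_def using K by (intro continuous_intros) (auto simp: abs_square_less_1 abs_square_eq_1 subset_eq)
    then have "compact ((\<lambda>x. \<alpha> * (q / L x ^ d)) ` K)" using K by (intro compact_continuous_image) auto
    then have "bounded ((\<lambda>x. \<alpha> * (q / L x ^ d)) ` K)" by (rule compact_imp_bounded)
    then obtain C where C0: "\<forall>y\<in>(\<lambda>x. \<alpha> * (q / L x ^ d)) ` K. norm y \<le> C"
      unfolding bounded_iff by blast
    have C: "\<And>x. x \<in> K \<Longrightarrow> norm (\<alpha> * (q / L x ^ d)) \<le> C" using C0 by blast
    have "emeasure (density \<sigma> (\<lambda>x. ennreal (g x))) K = (\<integral>\<^sup>+x. ennreal (g x) * indicator K x \<partial>\<sigma>)"
      by (simp add: emeasure_density \<sigma>_def)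
    also have "\<dots> \<le> (\<integral>\<^sup>+x. ennreal C * indicator K x \<partial>\<sigma>)"
    proof (rule nn_integral_mono)
      fix x
      show "ennreal (g x) * indicator K x \<le> ennreal C * indicator K x"
      proof (cases "x \<in> K")
        case True
        have "g x \<le> C"
        proof (cases "x \<in> hsec u c")
          case True
          have "\<alpha> * (q / L x ^ d) \<le> C"
            using order_trans[OF abs_ge_self C[OF \<open>x \<in> K\<close>, unfolded real_norm_def]] .
          then show ?thesis using True by (simp add: g_def)
        next
          case False
          have "0 \<le> C" using C[OF \<open>x \<in> K\<close>] by (meson norm_ge_zero order_trans)
          then show ?thesis using False by (simp add: g_def)
        qed
        then show ?thesis using True by (simp add: ennreal_leI)
      qed simp
    qed
    also have "\<dots> = ennreal C * emeasure \<sigma> K"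
      by (rule nn_integral_cmult_indicator) (simp add: \<sigma>_def sets_hm Kb)
    also have "\<dots> < \<infinity>"
      using hm_finite[OF m1 compact_imp_bounded Kb, of s] K by (simp add: \<sigma>_def ennreal_mult_less_top)
    finally show "emeasure (density \<sigma> (\<lambda>x. ennreal (g x))) K < \<infinity>" .
  next
    fix \<phi> :: "real^'n \<Rightarrow> real" assume tf: "test_fun \<phi>"
    interpret testf \<phi> by (rule testf.intro[OF tf])
    define F0 where "F0 x = \<phi> x / L x ^ d" for x
    have F0c: "continuous_on UNIV F0"
    proof (rule cont_glue[OF _ K(3) K(2)])
      show "continuous_on (ball 0 1) F0"
        unfolding F0_def L_def using phi_cont'[of _ "[]"]
        by (intro continuous_intros) (auto simp: abs_square_less_1 abs_square_eq_1)
    qed (simp add: F0_def phi0)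
    have F0s: "1 \<le> norm x \<Longrightarrow> F0 x = 0" for x
    proof -
      assume "1 \<le> norm x"
      then have "x \<notin> K" using K(2) by auto
      then show ?thesis by (simp add: F0_def phi0)
    qed
    have [measurable]: "mm_coeff i j \<in> borel_measurable borel" for i j
      unfolding mm_coeff_def[abs_def] by measurable
    have [measurable]: "F0 \<in> borel_measurable borel" using F0c by (rule borel_measurable_continuous_onI)
    have [measurable]: "\<phi> \<in> borel_measurable borel" using phi_cont'[of _ "[]"] by (auto intro: borel_measurable_continuous_onI)
    obtain B where B: "\<And>x. \<bar>F0 x\<bar> \<le> B" using bdd_cont_supp[OF F0c F0s] by blast
    have B0: "0 \<le> B" using B[of 0] by linarith
    have F0int: "integrable \<sigma> F0" unfolding \<sigma>_def by (rule hm_integrable[OF m1 _ B F0s]) simp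
    have gphi: "g x * \<phi> x = \<alpha> * q * (indicator (hsec u c) x * F0 x)" for x
      by (simp add: g_def F0_def)
    have AEs: "AE x in \<sigma>. m \<bullet> x = s" unfolding \<sigma>_def by (rule AE_hm[OF m1])
    show "integrable (density \<sigma> (\<lambda>x. ennreal (g x))) \<phi>"
    proof (subst integrable_density)
      show "integrable \<sigma> (\<lambda>x. g x *\<^sub>R \<phi> x)"
        unfolding \<sigma>_def
        by (rule hm_integrable[OF m1 _ _ , where B="\<alpha> * q * B"])
          (use B B0 assms(4) q0 F0s in \<open>auto simp: gphi abs_mult indicator_def hsec_eq intro!: mult_left_mono\<close>)
    qed (use g0 in \<open>auto simp: \<sigma>_def\<close>)
    have "integral\<^sup>L (density \<sigma> (\<lambda>x. ennreal (g x))) \<phi> = (\<integral>x. g x * \<phi> x \<partial>\<sigma>)"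
      by (subst integral_density) (use g0 in \<open>auto simp: \<sigma>_def\<close>)
    also have "\<dots> = (\<integral>x. \<alpha> * q * F0 x \<partial>\<sigma>)"
    proof (rule integral_cong_AE)
      show "AE x in \<sigma>. g x * \<phi> x = \<alpha> * q * F0 x"
        using AEs
      proof eventually_elim
        fix x assume x: "m \<bullet> x = s"
        show "g x * \<phi> x = \<alpha> * q * F0 x"
        proof (cases "x \<in> ball 0 1")
          case True then show ?thesis using x by (simp add: gphi hsec_eq)
        next
          case False then show ?thesis using F0s[of x] by (simp add: gphi hsec_eq)
        qed
      qed
    qed (auto simp: \<sigma>_def)
    also have "\<dots> = \<alpha> * q * (\<integral>x. F0 x \<partial>\<sigma>)" by simp
    finally have lhs: "integral\<^sup>L (density \<sigma> (\<lambda>x. ennreal (g x))) \<phi> = \<alpha> * q * (\<integral>x. F0 x \<partial>\<sigma>)" .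
    have "mm_pairing h \<phi> = (\<alpha> / q) * (\<integral>y. (\<Sum>i\<in>UNIV. \<Sum>j\<in>UNIV. m$i * m$j * (mm_coeff i j y * \<phi> y)) \<partial>\<sigma>)"
      unfolding \<sigma>_def by (rule pairing_formula[OF m1 hx tf])
    also have "(\<integral>y. (\<Sum>i\<in>UNIV. \<Sum>j\<in>UNIV. m$i * m$j * (mm_coeff i j y * \<phi> y)) \<partial>\<sigma>) = (\<integral>y. q\<^sup>2 * F0 y \<partial>\<sigma>)"
    proof (rule integral_cong_AE)
      show "AE y in \<sigma>. (\<Sum>i\<in>UNIV. \<Sum>j\<in>UNIV. m$i * m$j * (mm_coeff i j y * \<phi> y)) = q\<^sup>2 * F0 y"
        using AEs
      proof eventually_elim
        fix y assume "m \<bullet> y = s"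
        then show "(\<Sum>i\<in>UNIV. \<Sum>j\<in>UNIV. m$i * m$j * (mm_coeff i j y * \<phi> y)) = q\<^sup>2 * F0 y"
          using sum_mm[OF m1] qs by (simp add: F0_def d_def)
      qed
    qed (unfold \<sigma>_def, measurable)+
    also have "(\<integral>y. q\<^sup>2 * F0 y \<partial>\<sigma>) = q\<^sup>2 * (\<integral>y. F0 y \<partial>\<sigma>)" by simp
    finally have rhs: "mm_pairing h \<phi> = \<alpha> * q * (\<integral>x. F0 x \<partial>\<sigma>)"
      using q0 by (simp add: power2_eq_square)
    show "integral\<^sup>L (density \<sigma> (\<lambda>x. ennreal (g x))) \<phi> = mm_pairing h \<phi>"
      using lhs rhs by simp
  qed
qed

end
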